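(* (a) The integer pairs $(m,n)$ with $\mathrm{N}_{K/\mathbb{Q}}(m+n\gamma^2)=\pm1$ are exactly $(\pm1,0)$, $(0,\pm1)$, $\pm(-1,1)$, $\pm(2,-1)$, $\pm(-7,4)$. (b) The integer pairs $(m,n)$ with $\mathrm{N}_{K/\mathbb{Q}}(m+n\gamma^2)=\pm5$ are exactly $\pm(1,1)$, $\pm(-3,2)$. (c) The integer pairs $(m,n)$ with $\mathrm{N}_{K/\mathbb{Q}}(m+n\gamma^2)=\pm7$ are exactly $\pm(-1,2)$, $\pm(-5,3)$.
   Context: $\gamma$ is the real root of $x^3-x-1$, $K=\mathbb{Q}(\gamma)$, and $\mathrm{N}_{K/\mathbb{Q}}$ is the field norm; note $\mathrm{N}_{K/\mathbb{Q}}(m+n\gamma^2)=m^3+2m^2n+mn^2+n^3$. *)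

theory Defs
  imports Main
begin

text \<open>Norm from K = Q(gamma) (gamma the real root of x^3 - x - 1) to Q of the
  element m + n gamma^2, for integers m, n, written out as the explicit cubic form
  given in the paper's context: N(m + n gamma^2) = m^3 + 2 m^2 n + m n^2 + n^3.\<close>
definition normK :: "int \<Rightarrow> int \<Rightarrow> int" where
  "normK m n = m^3 + 2 * m^2 * n + m * n^2 + n^3"

end

theory Submission
  imports Defs Complex_Main "HOL-Computational_Algebra.Primes"
begin


datatype zg = ZG (c0: int) (c1: int) (c2: int)

instantiation zg :: comm_ring_1
begin
definition "zero_zg = ZG 0 0 0"
definition "one_zg = ZG 1 0 0"
definition "plus_zg x y = ZG (c0 x + c0 y) (c1 x + c1 y) (c2 x + c2 y)"
definition "minus_zg x y = ZG (c0 x - c0 y) (c1 x - c1 y) (c2 x - c2 y)"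
definition "uminus_zg x = ZG (- c0 x) (- c1 x) (- c2 x)"
definition "times_zg x y = ZG (c0 x * c0 y + c1 x * c2 y + c2 x * c1 y)
   (c0 x * c1 y + c1 x * c0 y + c1 x * c2 y + c2 x * c1 y + c2 x * c2 y)
   (c0 x * c2 y + c1 x * c1 y + c2 x * c0 y + c2 x * c2 y)"
instance
  by standard (auto simp: zero_zg_def one_zg_def plus_zg_def minus_zg_def uminus_zg_def times_zg_def
       zg.expand algebra_simps)
end

lemma zg_ops [simp]:
  "ZG a b c + ZG d e f = ZG (a+d) (b+e) (c+f)"
  "ZG a b c - ZG d e f = ZG (a-d) (b-e) (c-f)"
  "- ZG a b c = ZG (-a) (-b) (-c)"
  "ZG a b c * ZG d e f = ZG (a*d + b*f + c*e) (a*e + b*d + b*f + c*e + c*f) (a*f + b*e + c*d + c*f)"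
  by (simp_all add: plus_zg_def minus_zg_def uminus_zg_def times_zg_def)

lemma zg_01: "(0::zg) = ZG 0 0 0" "(1::zg) = ZG 1 0 0"
  by (simp_all add: zero_zg_def one_zg_def)

lemma of_int_zg [simp]: "(of_int k :: zg) = ZG k 0 0"
proof (induct k rule: int_induct[where k=0])
  case base then show ?case by (simp add: zg_01)
next
  case (step1 i) then show ?case by (simp add: of_int_add zg_01)
next
  case (step2 i) then show ?case by (simp add: of_int_diff zg_01)
qed

definition gm :: zg where "gm = ZG 0 1 0"
definition gi :: zg where "gi = ZG (-1) 0 1"


lemma gm_gi: "gm * gi = 1" by (simp add: gm_def gi_def zg_01)

definition nrm :: "zg \<Rightarrow> int" where
  "nrm x = c0 x^3 + 2*c0 x^2*c2 x - c0 x*c1 x^2 - 3*c0 x*c1 x*c2 x + c0 x*c2 x^2 + c1 x^3 - c1 x*c2 x^2 + c2 x^3"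

lemma nrm_ZG: "nrm (ZG a b c) = a^3 + 2*a^2*c - a*b^2 - 3*a*b*c + a*c^2 + b^3 - b*c^2 + c^3"
  by (simp add: nrm_def)

lemma nrm_normK: "nrm (ZG m 0 n) = normK m n"
  by (simp add: nrm_def normK_def)

lemma nrm_gm: "nrm (gm * x) = nrm x"
  by (cases x) (simp add: gm_def nrm_ZG power2_eq_square power3_eq_cube algebra_simps)

lemma nrm_gi: "nrm (gi * x) = nrm x"
  by (cases x) (simp add: gi_def nrm_ZG power2_eq_square power3_eq_cube algebra_simps)

lemma nrm_neg: "nrm (- x) = - nrm x"
  by (cases x) (simp add: nrm_ZG power2_eq_square power3_eq_cube algebra_simps)

definition gp :: "int \<Rightarrow> zg" where "gp k = gm ^ nat k * gi ^ nat (- k)"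



lemma gp_nat: "gp (int n) = gm ^ n" by (simp add: gp_def)
lemma gp_neg_nat: "gp (- int n) = gi ^ n" by (simp add: gp_def)

lemma gp_mul_gi: "gp n * gi = gp (n - 1)"
proof (cases "n > 0")
  case True
  then obtain m where m: "nat n = Suc m" by (cases "nat n") auto
  have "gp n * gi = gm ^ m * (gm * gi)" using True m by (simp add: gp_def mult.assoc)
  also have "\<dots> = gp (n - 1)" using True m by (simp add: gm_gi gp_def nat_diff_distrib')
  finally show ?thesis .
next
  case False
  then have "nat (- (n - 1)) = Suc (nat (- n))" by simp
  then show ?thesis using False by (simp add: gp_def mult.assoc)
qed

lemma gp_mul_gm: "gp n * gm = gp (n + 1)"
proof (cases "n < 0")
  case True
  then obtain m where m: "nat (-n) = Suc m" by (cases "nat (-n)") auto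
  have "gp n * gm = gi ^ m * (gi * gm)" using True m by (simp add: gp_def mult.assoc)
  also have "\<dots> = gp (n + 1)" using True m by (simp add: gm_gi mult.commute[of gi gm] gp_def nat_diff_distrib')
  finally show ?thesis .
next
  case False
  then have "nat (n + 1) = Suc (nat n)" by simp
  then show ?thesis using False by (simp add: gp_def power_Suc2 mult.assoc)
qed

lemma gp_add_nat: "gp (a + int n) = gp a * gm ^ n"
proof (induct n)
  case 0 then show ?case by simp
next
  case (Suc n)
  have "gp (a + int (Suc n)) = gp (a + int n) * gm" using gp_mul_gm[of "a + int n"] by (simp add: algebra_simps)
  also have "\<dots> = gp a * gm ^ Suc n" using Suc by (simp add: mult.assoc power_Suc2)
  finally show ?case .
qed

lemma gp_sub_nat: "gp (a - int n) = gp a * gi ^ n"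
proof (induct n)
  case 0 then show ?case by simp
next
  case (Suc n)
  have "a - int (Suc n) = a - int n - 1" by simp
  then have "gp (a - int (Suc n)) = gp (a - int n) * gi" using gp_mul_gi[of "a - int n"] by (simp only:)
  also have "\<dots> = gp a * gi ^ Suc n" using Suc by (simp add: mult.assoc power_Suc2)
  finally show ?case .
qed

lemma gp_add: "gp (a + b) = gp a * gp b"
proof (cases "b \<ge> 0")
  case True
  define n where "n = nat b"
  then have "b = int n" using True by simp
  then show ?thesis by (simp add: gp_add_nat gp_nat)
next
  case False
  define n where "n = nat (- b)"
  then have "b = - int n" using False by simp
  then show ?thesis using gp_sub_nat[of a n] by (simp add: gp_neg_nat)
qed

lemma gp_0: "gp 0 = 1" by (simp add: gp_def)

lemma gp_inv: "gp k * gp (- k) = 1" by (simp flip: gp_add add: gp_0)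

lemma nrm_gm_pow: "nrm (gm ^ n * x) = nrm x"
  by (induct n) (simp_all add: nrm_gm mult.assoc)
lemma nrm_gi_pow: "nrm (gi ^ n * x) = nrm x"
  by (induct n) (simp_all add: nrm_gi mult.assoc)
lemma nrm_gp: "nrm (gp k * x) = nrm x"
  by (simp add: gp_def mult.assoc nrm_gm_pow nrm_gi_pow)

definition g :: real where "g = (SOME x. x^3 = x + 1 \<and> 1.3247 \<le> x \<and> x \<le> 1.3248)"

lemma g_ex: "\<exists>x::real. x^3 = x + 1 \<and> 1.3247 \<le> x \<and> x \<le> 1.3248"
proof -
  have "\<exists>x\<ge>1.3247. x \<le> 1.3248 \<and> (\<lambda>x::real. x^3 - x - 1) x = 0"
    by (rule IVT) (auto intro!: continuous_intros simp: power3_eq_cube)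
  then show ?thesis by force
qed

lemma g_all: "g^3 = g + 1 \<and> 1.3247 \<le> g \<and> g \<le> 1.3248"
  unfolding g_def by (rule someI_ex[OF g_ex])

lemma g3: "g^3 = g + 1" and g_lo: "1.3247 \<le> g" and g_hi: "g \<le> 1.3248"
  using g_all by auto


definition e :: "zg \<Rightarrow> real" where "e x = c0 x + c1 x * g + c2 x * g^2"

lemma e_ZG: "e (ZG a b c) = a + b * g + c * g^2" by (simp add: e_def)

lemma e_mult: "e (x * y) = e x * e y"
proof (cases x; cases y)
  fix a b c a' b' c' assume xy: "x = ZG a b c" "y = ZG a' b' c'"
  have "e x * e y = e (x * y) + (b*c' + c*b' + c*c'*g) * (g^3 - g - 1)"
    unfolding xy by (simp add: e_ZG power2_eq_square power3_eq_cube algebra_simps)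
  then show ?thesis using g3 by simp
qed

lemma e_neg: "e (- x) = - e x" by (cases x) (simp add: e_ZG)
lemma e_one: "e 1 = 1" by (simp add: e_ZG zg_01)
lemma e_gm: "e gm = g" by (simp add: e_ZG gm_def)
lemma e_gi: "e gi = inverse g"
proof -
  have "g * (g^2 - 1) = 1" using g3 by (simp add: algebra_simps power3_eq_cube power2_eq_square)
  moreover have "g > 0" using g_lo by simp
  ultimately show ?thesis by (simp add: e_ZG gi_def field_simps)
qed

lemma e_pow: "e (x ^ n) = e x ^ n" by (induct n) (simp_all add: e_one e_mult)

lemma e_gp: "e (gp k) = g powr (of_int k)"
proof -
  have gp: "g > 0" using g_lo by simp
  have "e (gp k) = g ^ nat k * inverse g ^ nat (-k)"
    by (simp add: gp_def e_mult e_pow e_gm e_gi)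
  also have "\<dots> = g powr (of_int k)"
    using gp by (cases "k \<ge> 0") (simp_all add: powr_realpow[symmetric] powr_minus[symmetric] power_inverse)
  finally show ?thesis .
qed


lemma g_lo': "13247/10000 \<le> g" using g_lo by simp
lemma g_hi': "g \<le> 13248/10000" using g_hi by simp

lemma g2_lo: "175483/100000 \<le> g^2"
proof -
  have "(13247/10000::real)^2 \<le> g^2" using g_lo' by (intro power_mono) auto
  moreover have "(13247/10000::real)^2 = 175483009/100000000" by (simp add: power2_eq_square)
  ultimately show ?thesis by linarith
qed
lemma g2_hi: "g^2 \<le> 17551/10000"
proof -
  have "g^2 \<le> (13248/10000::real)^2" using g_lo' g_hi' by (intro power_mono) auto
  moreover have "(13248/10000::real)^2 = 175509504/100000000" by (simp add: power2_eq_square)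
  ultimately show ?thesis by linarith
qed

lemma cb_m2_m7: assumes "c = (-2)" "b = (-7)" "1 \<le> real_of_int a + real_of_int b * g + real_of_int c * g^2"
    "real_of_int a + real_of_int b * g + real_of_int c * g^2 < g" "nrm (ZG a b c) \<in> {1,5,7}"
  shows "(a,b,c) \<in> {(1,0,0),(-1,-1,2),(-2,1,1)}"
proof -
  have "real_of_int a > 13 \<and> real_of_int a < 15"
    using assms(3,4) g_lo' g_hi' g2_lo g2_hi by (simp add: assms(1,2); linarith)
  then have "13 < a \<and> a < 15" by linarith
  then have "a = 14" by simp
  then show ?thesis using assms(4,5) by (simp add: assms(1,2) nrm_ZG)
qed

lemma cb_m2_m6: assumes "c = (-2)" "b = (-6)" "1 \<le> real_of_int a + real_of_int b * g + real_of_int c * g^2"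
    "real_of_int a + real_of_int b * g + real_of_int c * g^2 < g" "nrm (ZG a b c) \<in> {1,5,7}"
  shows "(a,b,c) \<in> {(1,0,0),(-1,-1,2),(-2,1,1)}"
proof -
  have "real_of_int a > 12 \<and> real_of_int a < 13"
    using assms(3,4) g_lo' g_hi' g2_lo g2_hi by (simp add: assms(1,2); linarith)
  then have "12 < a \<and> a < 13" by linarith
  then show ?thesis by simp
qed

lemma cb_m2_m5: assumes "c = (-2)" "b = (-5)" "1 \<le> real_of_int a + real_of_int b * g + real_of_int c * g^2"
    "real_of_int a + real_of_int b * g + real_of_int c * g^2 < g" "nrm (ZG a b c) \<in> {1,5,7}"
  shows "(a,b,c) \<in> {(1,0,0),(-1,-1,2),(-2,1,1)}"
proof -
  have "real_of_int a > 11 \<and> real_of_int a < 12"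
    using assms(3,4) g_lo' g_hi' g2_lo g2_hi by (simp add: assms(1,2); linarith)
  then have "11 < a \<and> a < 12" by linarith
  then show ?thesis by simp
qed

lemma cb_m2_m4: assumes "c = (-2)" "b = (-4)" "1 \<le> real_of_int a + real_of_int b * g + real_of_int c * g^2"
    "real_of_int a + real_of_int b * g + real_of_int c * g^2 < g" "nrm (ZG a b c) \<in> {1,5,7}"
  shows "(a,b,c) \<in> {(1,0,0),(-1,-1,2),(-2,1,1)}"
proof -
  have "real_of_int a > 9 \<and> real_of_int a < 11"
    using assms(3,4) g_lo' g_hi' g2_lo g2_hi by (simp add: assms(1,2); linarith)
  then have "9 < a \<and> a < 11" by linarith
  then have "a = 10" by simp
  then show ?thesis using assms(4,5) by (simp add: assms(1,2) nrm_ZG)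
qed

lemma cb_m2_m3: assumes "c = (-2)" "b = (-3)" "1 \<le> real_of_int a + real_of_int b * g + real_of_int c * g^2"
    "real_of_int a + real_of_int b * g + real_of_int c * g^2 < g" "nrm (ZG a b c) \<in> {1,5,7}"
  shows "(a,b,c) \<in> {(1,0,0),(-1,-1,2),(-2,1,1)}"
proof -
  have "real_of_int a > 8 \<and> real_of_int a < 9"
    using assms(3,4) g_lo' g_hi' g2_lo g2_hi by (simp add: assms(1,2); linarith)
  then have "8 < a \<and> a < 9" by linarith
  then show ?thesis by simp
qed

lemma cb_m2_m2: assumes "c = (-2)" "b = (-2)" "1 \<le> real_of_int a + real_of_int b * g + real_of_int c * g^2"
    "real_of_int a + real_of_int b * g + real_of_int c * g^2 < g" "nrm (ZG a b c) \<in> {1,5,7}"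
  shows "(a,b,c) \<in> {(1,0,0),(-1,-1,2),(-2,1,1)}"
proof -
  have "real_of_int a > 7 \<and> real_of_int a < 8"
    using assms(3,4) g_lo' g_hi' g2_lo g2_hi by (simp add: assms(1,2); linarith)
  then have "7 < a \<and> a < 8" by linarith
  then show ?thesis by simp
qed

lemma cb_m2_m1: assumes "c = (-2)" "b = (-1)" "1 \<le> real_of_int a + real_of_int b * g + real_of_int c * g^2"
    "real_of_int a + real_of_int b * g + real_of_int c * g^2 < g" "nrm (ZG a b c) \<in> {1,5,7}"
  shows "(a,b,c) \<in> {(1,0,0),(-1,-1,2),(-2,1,1)}"
proof -
  have "real_of_int a > 5 \<and> real_of_int a < 7"
    using assms(3,4) g_lo' g_hi' g2_lo g2_hi by (simp add: assms(1,2); linarith)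
  then have "5 < a \<and> a < 7" by linarith
  then have "a = 6" by simp
  then show ?thesis using assms(4,5) by (simp add: assms(1,2) nrm_ZG)
qed

lemma cb_m2_0: assumes "c = (-2)" "b = 0" "1 \<le> real_of_int a + real_of_int b * g + real_of_int c * g^2"
    "real_of_int a + real_of_int b * g + real_of_int c * g^2 < g" "nrm (ZG a b c) \<in> {1,5,7}"
  shows "(a,b,c) \<in> {(1,0,0),(-1,-1,2),(-2,1,1)}"
proof -
  have "real_of_int a > 4 \<and> real_of_int a < 5"
    using assms(3,4) g_lo' g_hi' g2_lo g2_hi by (simp add: assms(1,2); linarith)
  then have "4 < a \<and> a < 5" by linarith
  then show ?thesis by simp
qed

lemma cb_m2_1: assumes "c = (-2)" "b = 1" "1 \<le> real_of_int a + real_of_int b * g + real_of_int c * g^2"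
    "real_of_int a + real_of_int b * g + real_of_int c * g^2 < g" "nrm (ZG a b c) \<in> {1,5,7}"
  shows "(a,b,c) \<in> {(1,0,0),(-1,-1,2),(-2,1,1)}"
proof -
  have "real_of_int a > 3 \<and> real_of_int a < 4"
    using assms(3,4) g_lo' g_hi' g2_lo g2_hi by (simp add: assms(1,2); linarith)
  then have "3 < a \<and> a < 4" by linarith
  then show ?thesis by simp
qed

lemma cb_m2_2: assumes "c = (-2)" "b = 2" "1 \<le> real_of_int a + real_of_int b * g + real_of_int c * g^2"
    "real_of_int a + real_of_int b * g + real_of_int c * g^2 < g" "nrm (ZG a b c) \<in> {1,5,7}"
  shows "(a,b,c) \<in> {(1,0,0),(-1,-1,2),(-2,1,1)}"
proof -
  have "real_of_int a > 1 \<and> real_of_int a < 3"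
    using assms(3,4) g_lo' g_hi' g2_lo g2_hi by (simp add: assms(1,2); linarith)
  then have "1 < a \<and> a < 3" by linarith
  then have "a = 2" by simp
  then show ?thesis using assms(4,5) by (simp add: assms(1,2) nrm_ZG)
qed

lemma cb_m1_m6: assumes "c = (-1)" "b = (-6)" "1 \<le> real_of_int a + real_of_int b * g + real_of_int c * g^2"
    "real_of_int a + real_of_int b * g + real_of_int c * g^2 < g" "nrm (ZG a b c) \<in> {1,5,7}"
  shows "(a,b,c) \<in> {(1,0,0),(-1,-1,2),(-2,1,1)}"
proof -
  have "real_of_int a > 10 \<and> real_of_int a < 12"
    using assms(3,4) g_lo' g_hi' g2_lo g2_hi by (simp add: assms(1,2); linarith)
  then have "10 < a \<and> a < 12" by linarith
  then have "a = 11" by simp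
  then show ?thesis using assms(4,5) by (simp add: assms(1,2) nrm_ZG)
qed

lemma cb_m1_m5: assumes "c = (-1)" "b = (-5)" "1 \<le> real_of_int a + real_of_int b * g + real_of_int c * g^2"
    "real_of_int a + real_of_int b * g + real_of_int c * g^2 < g" "nrm (ZG a b c) \<in> {1,5,7}"
  shows "(a,b,c) \<in> {(1,0,0),(-1,-1,2),(-2,1,1)}"
proof -
  have "real_of_int a > 9 \<and> real_of_int a < 10"
    using assms(3,4) g_lo' g_hi' g2_lo g2_hi by (simp add: assms(1,2); linarith)
  then have "9 < a \<and> a < 10" by linarith
  then show ?thesis by simp
qed

lemma cb_m1_m4: assumes "c = (-1)" "b = (-4)" "1 \<le> real_of_int a + real_of_int b * g + real_of_int c * g^2"
    "real_of_int a + real_of_int b * g + real_of_int c * g^2 < g" "nrm (ZG a b c) \<in> {1,5,7}"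
  shows "(a,b,c) \<in> {(1,0,0),(-1,-1,2),(-2,1,1)}"
proof -
  have "real_of_int a > 8 \<and> real_of_int a < 9"
    using assms(3,4) g_lo' g_hi' g2_lo g2_hi by (simp add: assms(1,2); linarith)
  then have "8 < a \<and> a < 9" by linarith
  then show ?thesis by simp
qed

lemma cb_m1_m3: assumes "c = (-1)" "b = (-3)" "1 \<le> real_of_int a + real_of_int b * g + real_of_int c * g^2"
    "real_of_int a + real_of_int b * g + real_of_int c * g^2 < g" "nrm (ZG a b c) \<in> {1,5,7}"
  shows "(a,b,c) \<in> {(1,0,0),(-1,-1,2),(-2,1,1)}"
proof -
  have "real_of_int a > 6 \<and> real_of_int a < 8"
    using assms(3,4) g_lo' g_hi' g2_lo g2_hi by (simp add: assms(1,2); linarith)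
  then have "6 < a \<and> a < 8" by linarith
  then have "a = 7" by simp
  then show ?thesis using assms(4,5) by (simp add: assms(1,2) nrm_ZG)
qed

lemma cb_m1_m2: assumes "c = (-1)" "b = (-2)" "1 \<le> real_of_int a + real_of_int b * g + real_of_int c * g^2"
    "real_of_int a + real_of_int b * g + real_of_int c * g^2 < g" "nrm (ZG a b c) \<in> {1,5,7}"
  shows "(a,b,c) \<in> {(1,0,0),(-1,-1,2),(-2,1,1)}"
proof -
  have "real_of_int a > 5 \<and> real_of_int a < 6"
    using assms(3,4) g_lo' g_hi' g2_lo g2_hi by (simp add: assms(1,2); linarith)
  then have "5 < a \<and> a < 6" by linarith
  then show ?thesis by simp
qed

lemma cb_m1_m1: assumes "c = (-1)" "b = (-1)" "1 \<le> real_of_int a + real_of_int b * g + real_of_int c * g^2"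
    "real_of_int a + real_of_int b * g + real_of_int c * g^2 < g" "nrm (ZG a b c) \<in> {1,5,7}"
  shows "(a,b,c) \<in> {(1,0,0),(-1,-1,2),(-2,1,1)}"
proof -
  have "real_of_int a > 4 \<and> real_of_int a < 5"
    using assms(3,4) g_lo' g_hi' g2_lo g2_hi by (simp add: assms(1,2); linarith)
  then have "4 < a \<and> a < 5" by linarith
  then show ?thesis by simp
qed

lemma cb_m1_0: assumes "c = (-1)" "b = 0" "1 \<le> real_of_int a + real_of_int b * g + real_of_int c * g^2"
    "real_of_int a + real_of_int b * g + real_of_int c * g^2 < g" "nrm (ZG a b c) \<in> {1,5,7}"
  shows "(a,b,c) \<in> {(1,0,0),(-1,-1,2),(-2,1,1)}"
proof -
  have "real_of_int a > 2 \<and> real_of_int a < 4"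
    using assms(3,4) g_lo' g_hi' g2_lo g2_hi by (simp add: assms(1,2); linarith)
  then have "2 < a \<and> a < 4" by linarith
  then have "a = 3" by simp
  then show ?thesis using assms(4,5) by (simp add: assms(1,2) nrm_ZG)
qed

lemma cb_m1_1: assumes "c = (-1)" "b = 1" "1 \<le> real_of_int a + real_of_int b * g + real_of_int c * g^2"
    "real_of_int a + real_of_int b * g + real_of_int c * g^2 < g" "nrm (ZG a b c) \<in> {1,5,7}"
  shows "(a,b,c) \<in> {(1,0,0),(-1,-1,2),(-2,1,1)}"
proof -
  have "real_of_int a > 1 \<and> real_of_int a < 2"
    using assms(3,4) g_lo' g_hi' g2_lo g2_hi by (simp add: assms(1,2); linarith)
  then have "1 < a \<and> a < 2" by linarith
  then show ?thesis by simp
qed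

lemma cb_m1_2: assumes "c = (-1)" "b = 2" "1 \<le> real_of_int a + real_of_int b * g + real_of_int c * g^2"
    "real_of_int a + real_of_int b * g + real_of_int c * g^2 < g" "nrm (ZG a b c) \<in> {1,5,7}"
  shows "(a,b,c) \<in> {(1,0,0),(-1,-1,2),(-2,1,1)}"
proof -
  have "real_of_int a > 0 \<and> real_of_int a < 1"
    using assms(3,4) g_lo' g_hi' g2_lo g2_hi by (simp add: assms(1,2); linarith)
  then have "0 < a \<and> a < 1" by linarith
  then show ?thesis by simp
qed

lemma cb_m1_3: assumes "c = (-1)" "b = 3" "1 \<le> real_of_int a + real_of_int b * g + real_of_int c * g^2"
    "real_of_int a + real_of_int b * g + real_of_int c * g^2 < g" "nrm (ZG a b c) \<in> {1,5,7}"
  shows "(a,b,c) \<in> {(1,0,0),(-1,-1,2),(-2,1,1)}"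
proof -
  have "real_of_int a > (-2) \<and> real_of_int a < 0"
    using assms(3,4) g_lo' g_hi' g2_lo g2_hi by (simp add: assms(1,2); linarith)
  then have "(-2) < a \<and> a < 0" by linarith
  then have "a = (-1)" by simp
  then show ?thesis using assms(4,5) by (simp add: assms(1,2) nrm_ZG)
qed

lemma cb_0_m4: assumes "c = 0" "b = (-4)" "1 \<le> real_of_int a + real_of_int b * g + real_of_int c * g^2"
    "real_of_int a + real_of_int b * g + real_of_int c * g^2 < g" "nrm (ZG a b c) \<in> {1,5,7}"
  shows "(a,b,c) \<in> {(1,0,0),(-1,-1,2),(-2,1,1)}"
proof -
  have "real_of_int a > 6 \<and> real_of_int a < 7"
    using assms(3,4) g_lo' g_hi' g2_lo g2_hi by (simp add: assms(1,2); linarith)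
  then have "6 < a \<and> a < 7" by linarith
  then show ?thesis by simp
qed

lemma cb_0_m3: assumes "c = 0" "b = (-3)" "1 \<le> real_of_int a + real_of_int b * g + real_of_int c * g^2"
    "real_of_int a + real_of_int b * g + real_of_int c * g^2 < g" "nrm (ZG a b c) \<in> {1,5,7}"
  shows "(a,b,c) \<in> {(1,0,0),(-1,-1,2),(-2,1,1)}"
proof -
  have "real_of_int a > 4 \<and> real_of_int a < 6"
    using assms(3,4) g_lo' g_hi' g2_lo g2_hi by (simp add: assms(1,2); linarith)
  then have "4 < a \<and> a < 6" by linarith
  then have "a = 5" by simp
  then show ?thesis using assms(4,5) by (simp add: assms(1,2) nrm_ZG)
qed

lemma cb_0_m2: assumes "c = 0" "b = (-2)" "1 \<le> real_of_int a + real_of_int b * g + real_of_int c * g^2"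
    "real_of_int a + real_of_int b * g + real_of_int c * g^2 < g" "nrm (ZG a b c) \<in> {1,5,7}"
  shows "(a,b,c) \<in> {(1,0,0),(-1,-1,2),(-2,1,1)}"
proof -
  have "real_of_int a > 3 \<and> real_of_int a < 4"
    using assms(3,4) g_lo' g_hi' g2_lo g2_hi by (simp add: assms(1,2); linarith)
  then have "3 < a \<and> a < 4" by linarith
  then show ?thesis by simp
qed

lemma cb_0_m1: assumes "c = 0" "b = (-1)" "1 \<le> real_of_int a + real_of_int b * g + real_of_int c * g^2"
    "real_of_int a + real_of_int b * g + real_of_int c * g^2 < g" "nrm (ZG a b c) \<in> {1,5,7}"
  shows "(a,b,c) \<in> {(1,0,0),(-1,-1,2),(-2,1,1)}"
proof -
  have "real_of_int a > 2 \<and> real_of_int a < 3"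
    using assms(3,4) g_lo' g_hi' g2_lo g2_hi by (simp add: assms(1,2); linarith)
  then have "2 < a \<and> a < 3" by linarith
  then show ?thesis by simp
qed

lemma cb_0_0: assumes "c = 0" "b = 0" "1 \<le> real_of_int a + real_of_int b * g + real_of_int c * g^2"
    "real_of_int a + real_of_int b * g + real_of_int c * g^2 < g" "nrm (ZG a b c) \<in> {1,5,7}"
  shows "(a,b,c) \<in> {(1,0,0),(-1,-1,2),(-2,1,1)}"
proof -
  have "real_of_int a > 0 \<and> real_of_int a < 2"
    using assms(3,4) g_lo' g_hi' g2_lo g2_hi by (simp add: assms(1,2); linarith)
  then have "0 < a \<and> a < 2" by linarith
  then have "a = 1" by simp
  then show ?thesis using assms(4,5) by (simp add: assms(1,2) nrm_ZG)
qed

lemma cb_0_1: assumes "c = 0" "b = 1" "1 \<le> real_of_int a + real_of_int b * g + real_of_int c * g^2"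
    "real_of_int a + real_of_int b * g + real_of_int c * g^2 < g" "nrm (ZG a b c) \<in> {1,5,7}"
  shows "(a,b,c) \<in> {(1,0,0),(-1,-1,2),(-2,1,1)}"
proof -
  have "real_of_int a > (-1) \<and> real_of_int a < 1"
    using assms(3,4) g_lo' g_hi' g2_lo g2_hi by (simp add: assms(1,2); linarith)
  then have "(-1) < a \<and> a < 1" by linarith
  then have "a = 0" by simp
  then show ?thesis using assms(4,5) by (simp add: assms(1,2) nrm_ZG)
qed

lemma cb_0_2: assumes "c = 0" "b = 2" "1 \<le> real_of_int a + real_of_int b * g + real_of_int c * g^2"
    "real_of_int a + real_of_int b * g + real_of_int c * g^2 < g" "nrm (ZG a b c) \<in> {1,5,7}"
  shows "(a,b,c) \<in> {(1,0,0),(-1,-1,2),(-2,1,1)}"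
proof -
  have "real_of_int a > (-2) \<and> real_of_int a < (-1)"
    using assms(3,4) g_lo' g_hi' g2_lo g2_hi by (simp add: assms(1,2); linarith)
  then have "(-2) < a \<and> a < (-1)" by linarith
  then show ?thesis by simp
qed

lemma cb_0_3: assumes "c = 0" "b = 3" "1 \<le> real_of_int a + real_of_int b * g + real_of_int c * g^2"
    "real_of_int a + real_of_int b * g + real_of_int c * g^2 < g" "nrm (ZG a b c) \<in> {1,5,7}"
  shows "(a,b,c) \<in> {(1,0,0),(-1,-1,2),(-2,1,1)}"
proof -
  have "real_of_int a > (-3) \<and> real_of_int a < (-2)"
    using assms(3,4) g_lo' g_hi' g2_lo g2_hi by (simp add: assms(1,2); linarith)
  then have "(-3) < a \<and> a < (-2)" by linarith
  then show ?thesis by simp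
qed

lemma cb_0_4: assumes "c = 0" "b = 4" "1 \<le> real_of_int a + real_of_int b * g + real_of_int c * g^2"
    "real_of_int a + real_of_int b * g + real_of_int c * g^2 < g" "nrm (ZG a b c) \<in> {1,5,7}"
  shows "(a,b,c) \<in> {(1,0,0),(-1,-1,2),(-2,1,1)}"
proof -
  have "real_of_int a > (-5) \<and> real_of_int a < (-3)"
    using assms(3,4) g_lo' g_hi' g2_lo g2_hi by (simp add: assms(1,2); linarith)
  then have "(-5) < a \<and> a < (-3)" by linarith
  then have "a = (-4)" by simp
  then show ?thesis using assms(4,5) by (simp add: assms(1,2) nrm_ZG)
qed

lemma cb_1_m3: assumes "c = 1" "b = (-3)" "1 \<le> real_of_int a + real_of_int b * g + real_of_int c * g^2"
    "real_of_int a + real_of_int b * g + real_of_int c * g^2 < g" "nrm (ZG a b c) \<in> {1,5,7}"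
  shows "(a,b,c) \<in> {(1,0,0),(-1,-1,2),(-2,1,1)}"
proof -
  have "real_of_int a > 3 \<and> real_of_int a < 4"
    using assms(3,4) g_lo' g_hi' g2_lo g2_hi by (simp add: assms(1,2); linarith)
  then have "3 < a \<and> a < 4" by linarith
  then show ?thesis by simp
qed

lemma cb_1_m2: assumes "c = 1" "b = (-2)" "1 \<le> real_of_int a + real_of_int b * g + real_of_int c * g^2"
    "real_of_int a + real_of_int b * g + real_of_int c * g^2 < g" "nrm (ZG a b c) \<in> {1,5,7}"
  shows "(a,b,c) \<in> {(1,0,0),(-1,-1,2),(-2,1,1)}"
proof -
  have "real_of_int a > 1 \<and> real_of_int a < 3"
    using assms(3,4) g_lo' g_hi' g2_lo g2_hi by (simp add: assms(1,2); linarith)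
  then have "1 < a \<and> a < 3" by linarith
  then have "a = 2" by simp
  then show ?thesis using assms(4,5) by (simp add: assms(1,2) nrm_ZG)
qed

lemma cb_1_m1: assumes "c = 1" "b = (-1)" "1 \<le> real_of_int a + real_of_int b * g + real_of_int c * g^2"
    "real_of_int a + real_of_int b * g + real_of_int c * g^2 < g" "nrm (ZG a b c) \<in> {1,5,7}"
  shows "(a,b,c) \<in> {(1,0,0),(-1,-1,2),(-2,1,1)}"
proof -
  have "real_of_int a > 0 \<and> real_of_int a < 1"
    using assms(3,4) g_lo' g_hi' g2_lo g2_hi by (simp add: assms(1,2); linarith)
  then have "0 < a \<and> a < 1" by linarith
  then show ?thesis by simp
qed

lemma cb_1_0: assumes "c = 1" "b = 0" "1 \<le> real_of_int a + real_of_int b * g + real_of_int c * g^2"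
    "real_of_int a + real_of_int b * g + real_of_int c * g^2 < g" "nrm (ZG a b c) \<in> {1,5,7}"
  shows "(a,b,c) \<in> {(1,0,0),(-1,-1,2),(-2,1,1)}"
proof -
  have "real_of_int a > (-1) \<and> real_of_int a < 0"
    using assms(3,4) g_lo' g_hi' g2_lo g2_hi by (simp add: assms(1,2); linarith)
  then have "(-1) < a \<and> a < 0" by linarith
  then show ?thesis by simp
qed

lemma cb_1_1: assumes "c = 1" "b = 1" "1 \<le> real_of_int a + real_of_int b * g + real_of_int c * g^2"
    "real_of_int a + real_of_int b * g + real_of_int c * g^2 < g" "nrm (ZG a b c) \<in> {1,5,7}"
  shows "(a,b,c) \<in> {(1,0,0),(-1,-1,2),(-2,1,1)}"
proof -
  have "real_of_int a > (-3) \<and> real_of_int a < (-1)"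
    using assms(3,4) g_lo' g_hi' g2_lo g2_hi by (simp add: assms(1,2); linarith)
  then have "(-3) < a \<and> a < (-1)" by linarith
  then have "a = (-2)" by simp
  then show ?thesis using assms(4,5) by (simp add: assms(1,2) nrm_ZG)
qed

lemma cb_1_2: assumes "c = 1" "b = 2" "1 \<le> real_of_int a + real_of_int b * g + real_of_int c * g^2"
    "real_of_int a + real_of_int b * g + real_of_int c * g^2 < g" "nrm (ZG a b c) \<in> {1,5,7}"
  shows "(a,b,c) \<in> {(1,0,0),(-1,-1,2),(-2,1,1)}"
proof -
  have "real_of_int a > (-4) \<and> real_of_int a < (-3)"
    using assms(3,4) g_lo' g_hi' g2_lo g2_hi by (simp add: assms(1,2); linarith)
  then have "(-4) < a \<and> a < (-3)" by linarith
  then show ?thesis by simp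
qed

lemma cb_1_3: assumes "c = 1" "b = 3" "1 \<le> real_of_int a + real_of_int b * g + real_of_int c * g^2"
    "real_of_int a + real_of_int b * g + real_of_int c * g^2 < g" "nrm (ZG a b c) \<in> {1,5,7}"
  shows "(a,b,c) \<in> {(1,0,0),(-1,-1,2),(-2,1,1)}"
proof -
  have "real_of_int a > (-5) \<and> real_of_int a < (-4)"
    using assms(3,4) g_lo' g_hi' g2_lo g2_hi by (simp add: assms(1,2); linarith)
  then have "(-5) < a \<and> a < (-4)" by linarith
  then show ?thesis by simp
qed

lemma cb_1_4: assumes "c = 1" "b = 4" "1 \<le> real_of_int a + real_of_int b * g + real_of_int c * g^2"
    "real_of_int a + real_of_int b * g + real_of_int c * g^2 < g" "nrm (ZG a b c) \<in> {1,5,7}"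
  shows "(a,b,c) \<in> {(1,0,0),(-1,-1,2),(-2,1,1)}"
proof -
  have "real_of_int a > (-7) \<and> real_of_int a < (-5)"
    using assms(3,4) g_lo' g_hi' g2_lo g2_hi by (simp add: assms(1,2); linarith)
  then have "(-7) < a \<and> a < (-5)" by linarith
  then have "a = (-6)" by simp
  then show ?thesis using assms(4,5) by (simp add: assms(1,2) nrm_ZG)
qed

lemma cb_1_5: assumes "c = 1" "b = 5" "1 \<le> real_of_int a + real_of_int b * g + real_of_int c * g^2"
    "real_of_int a + real_of_int b * g + real_of_int c * g^2 < g" "nrm (ZG a b c) \<in> {1,5,7}"
  shows "(a,b,c) \<in> {(1,0,0),(-1,-1,2),(-2,1,1)}"
proof -
  have "real_of_int a > (-8) \<and> real_of_int a < (-7)"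
    using assms(3,4) g_lo' g_hi' g2_lo g2_hi by (simp add: assms(1,2); linarith)
  then have "(-8) < a \<and> a < (-7)" by linarith
  then show ?thesis by simp
qed

lemma cb_1_6: assumes "c = 1" "b = 6" "1 \<le> real_of_int a + real_of_int b * g + real_of_int c * g^2"
    "real_of_int a + real_of_int b * g + real_of_int c * g^2 < g" "nrm (ZG a b c) \<in> {1,5,7}"
  shows "(a,b,c) \<in> {(1,0,0),(-1,-1,2),(-2,1,1)}"
proof -
  have "real_of_int a > (-9) \<and> real_of_int a < (-8)"
    using assms(3,4) g_lo' g_hi' g2_lo g2_hi by (simp add: assms(1,2); linarith)
  then have "(-9) < a \<and> a < (-8)" by linarith
  then show ?thesis by simp
qed

lemma cb_2_m2: assumes "c = 2" "b = (-2)" "1 \<le> real_of_int a + real_of_int b * g + real_of_int c * g^2"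
    "real_of_int a + real_of_int b * g + real_of_int c * g^2 < g" "nrm (ZG a b c) \<in> {1,5,7}"
  shows "(a,b,c) \<in> {(1,0,0),(-1,-1,2),(-2,1,1)}"
proof -
  have "real_of_int a > 0 \<and> real_of_int a < 1"
    using assms(3,4) g_lo' g_hi' g2_lo g2_hi by (simp add: assms(1,2); linarith)
  then have "0 < a \<and> a < 1" by linarith
  then show ?thesis by simp
qed

lemma cb_2_m1: assumes "c = 2" "b = (-1)" "1 \<le> real_of_int a + real_of_int b * g + real_of_int c * g^2"
    "real_of_int a + real_of_int b * g + real_of_int c * g^2 < g" "nrm (ZG a b c) \<in> {1,5,7}"
  shows "(a,b,c) \<in> {(1,0,0),(-1,-1,2),(-2,1,1)}"
proof -
  have "real_of_int a > (-2) \<and> real_of_int a < 0"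
    using assms(3,4) g_lo' g_hi' g2_lo g2_hi by (simp add: assms(1,2); linarith)
  then have "(-2) < a \<and> a < 0" by linarith
  then have "a = (-1)" by simp
  then show ?thesis using assms(4,5) by (simp add: assms(1,2) nrm_ZG)
qed

lemma cb_2_0: assumes "c = 2" "b = 0" "1 \<le> real_of_int a + real_of_int b * g + real_of_int c * g^2"
    "real_of_int a + real_of_int b * g + real_of_int c * g^2 < g" "nrm (ZG a b c) \<in> {1,5,7}"
  shows "(a,b,c) \<in> {(1,0,0),(-1,-1,2),(-2,1,1)}"
proof -
  have "real_of_int a > (-3) \<and> real_of_int a < (-2)"
    using assms(3,4) g_lo' g_hi' g2_lo g2_hi by (simp add: assms(1,2); linarith)
  then have "(-3) < a \<and> a < (-2)" by linarith
  then show ?thesis by simp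
qed

lemma cb_2_1: assumes "c = 2" "b = 1" "1 \<le> real_of_int a + real_of_int b * g + real_of_int c * g^2"
    "real_of_int a + real_of_int b * g + real_of_int c * g^2 < g" "nrm (ZG a b c) \<in> {1,5,7}"
  shows "(a,b,c) \<in> {(1,0,0),(-1,-1,2),(-2,1,1)}"
proof -
  have "real_of_int a > (-4) \<and> real_of_int a < (-3)"
    using assms(3,4) g_lo' g_hi' g2_lo g2_hi by (simp add: assms(1,2); linarith)
  then have "(-4) < a \<and> a < (-3)" by linarith
  then show ?thesis by simp
qed

lemma cb_2_2: assumes "c = 2" "b = 2" "1 \<le> real_of_int a + real_of_int b * g + real_of_int c * g^2"
    "real_of_int a + real_of_int b * g + real_of_int c * g^2 < g" "nrm (ZG a b c) \<in> {1,5,7}"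
  shows "(a,b,c) \<in> {(1,0,0),(-1,-1,2),(-2,1,1)}"
proof -
  have "real_of_int a > (-6) \<and> real_of_int a < (-4)"
    using assms(3,4) g_lo' g_hi' g2_lo g2_hi by (simp add: assms(1,2); linarith)
  then have "(-6) < a \<and> a < (-4)" by linarith
  then have "a = (-5)" by simp
  then show ?thesis using assms(4,5) by (simp add: assms(1,2) nrm_ZG)
qed

lemma cb_2_3: assumes "c = 2" "b = 3" "1 \<le> real_of_int a + real_of_int b * g + real_of_int c * g^2"
    "real_of_int a + real_of_int b * g + real_of_int c * g^2 < g" "nrm (ZG a b c) \<in> {1,5,7}"
  shows "(a,b,c) \<in> {(1,0,0),(-1,-1,2),(-2,1,1)}"
proof -
  have "real_of_int a > (-7) \<and> real_of_int a < (-6)"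
    using assms(3,4) g_lo' g_hi' g2_lo g2_hi by (simp add: assms(1,2); linarith)
  then have "(-7) < a \<and> a < (-6)" by linarith
  then show ?thesis by simp
qed

lemma cb_2_4: assumes "c = 2" "b = 4" "1 \<le> real_of_int a + real_of_int b * g + real_of_int c * g^2"
    "real_of_int a + real_of_int b * g + real_of_int c * g^2 < g" "nrm (ZG a b c) \<in> {1,5,7}"
  shows "(a,b,c) \<in> {(1,0,0),(-1,-1,2),(-2,1,1)}"
proof -
  have "real_of_int a > (-8) \<and> real_of_int a < (-7)"
    using assms(3,4) g_lo' g_hi' g2_lo g2_hi by (simp add: assms(1,2); linarith)
  then have "(-8) < a \<and> a < (-7)" by linarith
  then show ?thesis by simp
qed

lemma cb_2_5: assumes "c = 2" "b = 5" "1 \<le> real_of_int a + real_of_int b * g + real_of_int c * g^2"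
    "real_of_int a + real_of_int b * g + real_of_int c * g^2 < g" "nrm (ZG a b c) \<in> {1,5,7}"
  shows "(a,b,c) \<in> {(1,0,0),(-1,-1,2),(-2,1,1)}"
proof -
  have "real_of_int a > (-10) \<and> real_of_int a < (-8)"
    using assms(3,4) g_lo' g_hi' g2_lo g2_hi by (simp add: assms(1,2); linarith)
  then have "(-10) < a \<and> a < (-8)" by linarith
  then have "a = (-9)" by simp
  then show ?thesis using assms(4,5) by (simp add: assms(1,2) nrm_ZG)
qed

lemma cb_2_6: assumes "c = 2" "b = 6" "1 \<le> real_of_int a + real_of_int b * g + real_of_int c * g^2"
    "real_of_int a + real_of_int b * g + real_of_int c * g^2 < g" "nrm (ZG a b c) \<in> {1,5,7}"
  shows "(a,b,c) \<in> {(1,0,0),(-1,-1,2),(-2,1,1)}"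
proof -
  have "real_of_int a > (-11) \<and> real_of_int a < (-10)"
    using assms(3,4) g_lo' g_hi' g2_lo g2_hi by (simp add: assms(1,2); linarith)
  then have "(-11) < a \<and> a < (-10)" by linarith
  then show ?thesis by simp
qed

lemma cb_2_7: assumes "c = 2" "b = 7" "1 \<le> real_of_int a + real_of_int b * g + real_of_int c * g^2"
    "real_of_int a + real_of_int b * g + real_of_int c * g^2 < g" "nrm (ZG a b c) \<in> {1,5,7}"
  shows "(a,b,c) \<in> {(1,0,0),(-1,-1,2),(-2,1,1)}"
proof -
  have "real_of_int a > (-12) \<and> real_of_int a < (-11)"
    using assms(3,4) g_lo' g_hi' g2_lo g2_hi by (simp add: assms(1,2); linarith)
  then have "(-12) < a \<and> a < (-11)" by linarith
  then show ?thesis by simp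
qed

lemma cb_3_0: assumes "c = 3" "b = 0" "1 \<le> real_of_int a + real_of_int b * g + real_of_int c * g^2"
    "real_of_int a + real_of_int b * g + real_of_int c * g^2 < g" "nrm (ZG a b c) \<in> {1,5,7}"
  shows "(a,b,c) \<in> {(1,0,0),(-1,-1,2),(-2,1,1)}"
proof -
  have "real_of_int a > (-5) \<and> real_of_int a < (-3)"
    using assms(3,4) g_lo' g_hi' g2_lo g2_hi by (simp add: assms(1,2); linarith)
  then have "(-5) < a \<and> a < (-3)" by linarith
  then have "a = (-4)" by simp
  then show ?thesis using assms(4,5) by (simp add: assms(1,2) nrm_ZG)
qed

lemma cb_3_1: assumes "c = 3" "b = 1" "1 \<le> real_of_int a + real_of_int b * g + real_of_int c * g^2"
    "real_of_int a + real_of_int b * g + real_of_int c * g^2 < g" "nrm (ZG a b c) \<in> {1,5,7}"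
  shows "(a,b,c) \<in> {(1,0,0),(-1,-1,2),(-2,1,1)}"
proof -
  have "real_of_int a > (-6) \<and> real_of_int a < (-5)"
    using assms(3,4) g_lo' g_hi' g2_lo g2_hi by (simp add: assms(1,2); linarith)
  then have "(-6) < a \<and> a < (-5)" by linarith
  then show ?thesis by simp
qed

lemma cb_3_2: assumes "c = 3" "b = 2" "1 \<le> real_of_int a + real_of_int b * g + real_of_int c * g^2"
    "real_of_int a + real_of_int b * g + real_of_int c * g^2 < g" "nrm (ZG a b c) \<in> {1,5,7}"
  shows "(a,b,c) \<in> {(1,0,0),(-1,-1,2),(-2,1,1)}"
proof -
  have "real_of_int a > (-7) \<and> real_of_int a < (-6)"
    using assms(3,4) g_lo' g_hi' g2_lo g2_hi by (simp add: assms(1,2); linarith)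
  then have "(-7) < a \<and> a < (-6)" by linarith
  then show ?thesis by simp
qed

lemma cb_3_3: assumes "c = 3" "b = 3" "1 \<le> real_of_int a + real_of_int b * g + real_of_int c * g^2"
    "real_of_int a + real_of_int b * g + real_of_int c * g^2 < g" "nrm (ZG a b c) \<in> {1,5,7}"
  shows "(a,b,c) \<in> {(1,0,0),(-1,-1,2),(-2,1,1)}"
proof -
  have "real_of_int a > (-9) \<and> real_of_int a < (-7)"
    using assms(3,4) g_lo' g_hi' g2_lo g2_hi by (simp add: assms(1,2); linarith)
  then have "(-9) < a \<and> a < (-7)" by linarith
  then have "a = (-8)" by simp
  then show ?thesis using assms(4,5) by (simp add: assms(1,2) nrm_ZG)
qed

lemma cb_3_4: assumes "c = 3" "b = 4" "1 \<le> real_of_int a + real_of_int b * g + real_of_int c * g^2"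
    "real_of_int a + real_of_int b * g + real_of_int c * g^2 < g" "nrm (ZG a b c) \<in> {1,5,7}"
  shows "(a,b,c) \<in> {(1,0,0),(-1,-1,2),(-2,1,1)}"
proof -
  have "real_of_int a > (-10) \<and> real_of_int a < (-9)"
    using assms(3,4) g_lo' g_hi' g2_lo g2_hi by (simp add: assms(1,2); linarith)
  then have "(-10) < a \<and> a < (-9)" by linarith
  then show ?thesis by simp
qed

lemma cb_3_5: assumes "c = 3" "b = 5" "1 \<le> real_of_int a + real_of_int b * g + real_of_int c * g^2"
    "real_of_int a + real_of_int b * g + real_of_int c * g^2 < g" "nrm (ZG a b c) \<in> {1,5,7}"
  shows "(a,b,c) \<in> {(1,0,0),(-1,-1,2),(-2,1,1)}"
proof -
  have "real_of_int a > (-11) \<and> real_of_int a < (-10)"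
    using assms(3,4) g_lo' g_hi' g2_lo g2_hi by (simp add: assms(1,2); linarith)
  then have "(-11) < a \<and> a < (-10)" by linarith
  then show ?thesis by simp
qed

lemma cb_3_6: assumes "c = 3" "b = 6" "1 \<le> real_of_int a + real_of_int b * g + real_of_int c * g^2"
    "real_of_int a + real_of_int b * g + real_of_int c * g^2 < g" "nrm (ZG a b c) \<in> {1,5,7}"
  shows "(a,b,c) \<in> {(1,0,0),(-1,-1,2),(-2,1,1)}"
proof -
  have "real_of_int a > (-13) \<and> real_of_int a < (-11)"
    using assms(3,4) g_lo' g_hi' g2_lo g2_hi by (simp add: assms(1,2); linarith)
  then have "(-13) < a \<and> a < (-11)" by linarith
  then have "a = (-12)" by simp
  then show ?thesis using assms(4,5) by (simp add: assms(1,2) nrm_ZG)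
qed

lemma cb_3_7: assumes "c = 3" "b = 7" "1 \<le> real_of_int a + real_of_int b * g + real_of_int c * g^2"
    "real_of_int a + real_of_int b * g + real_of_int c * g^2 < g" "nrm (ZG a b c) \<in> {1,5,7}"
  shows "(a,b,c) \<in> {(1,0,0),(-1,-1,2),(-2,1,1)}"
proof -
  have "real_of_int a > (-14) \<and> real_of_int a < (-13)"
    using assms(3,4) g_lo' g_hi' g2_lo g2_hi by (simp add: assms(1,2); linarith)
  then have "(-14) < a \<and> a < (-13)" by linarith
  then show ?thesis by simp
qed

lemma cb_3_8: assumes "c = 3" "b = 8" "1 \<le> real_of_int a + real_of_int b * g + real_of_int c * g^2"
    "real_of_int a + real_of_int b * g + real_of_int c * g^2 < g" "nrm (ZG a b c) \<in> {1,5,7}"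
  shows "(a,b,c) \<in> {(1,0,0),(-1,-1,2),(-2,1,1)}"
proof -
  have "real_of_int a > (-15) \<and> real_of_int a < (-14)"
    using assms(3,4) g_lo' g_hi' g2_lo g2_hi by (simp add: assms(1,2); linarith)
  then have "(-15) < a \<and> a < (-14)" by linarith
  then show ?thesis by simp
qed


lemma c_m2: assumes "c = (-2)" "\<bar>real_of_int b - real_of_int c * g\<bar> \<le> 4706/1000" "1 \<le> real_of_int a + real_of_int b * g + real_of_int c * g^2"
    "real_of_int a + real_of_int b * g + real_of_int c * g^2 < g" "nrm (ZG a b c) \<in> {1,5,7}"
  shows "(a,b,c) \<in> {(1,0,0),(-1,-1,2),(-2,1,1)}"
proof -
  have cg: "real_of_int c * g = (-2) * g" by (simp add: assms(1))
  have "real_of_int b > (-8) \<and> real_of_int b < 3"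
    using assms(2) cg g_lo' g_hi' unfolding abs_le_iff by linarith
  then have "(-8) < b \<and> b < 3" by linarith
  then have "b = (-7) \<or> b = (-6) \<or> b = (-5) \<or> b = (-4) \<or> b = (-3) \<or> b = (-2) \<or> b = (-1) \<or> b = 0 \<or> b = 1 \<or> b = 2" by presburger
  then show ?thesis
    apply (elim disjE)
    apply (erule cb_m2_m7[OF assms(1) _ assms(3-5)])
    apply (erule cb_m2_m6[OF assms(1) _ assms(3-5)])
    apply (erule cb_m2_m5[OF assms(1) _ assms(3-5)])
    apply (erule cb_m2_m4[OF assms(1) _ assms(3-5)])
    apply (erule cb_m2_m3[OF assms(1) _ assms(3-5)])
    apply (erule cb_m2_m2[OF assms(1) _ assms(3-5)])
    apply (erule cb_m2_m1[OF assms(1) _ assms(3-5)])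
    apply (erule cb_m2_0[OF assms(1) _ assms(3-5)])
    apply (erule cb_m2_1[OF assms(1) _ assms(3-5)])
    apply (erule cb_m2_2[OF assms(1) _ assms(3-5)])
    done
qed

lemma c_m1: assumes "c = (-1)" "\<bar>real_of_int b - real_of_int c * g\<bar> \<le> 4706/1000" "1 \<le> real_of_int a + real_of_int b * g + real_of_int c * g^2"
    "real_of_int a + real_of_int b * g + real_of_int c * g^2 < g" "nrm (ZG a b c) \<in> {1,5,7}"
  shows "(a,b,c) \<in> {(1,0,0),(-1,-1,2),(-2,1,1)}"
proof -
  have cg: "real_of_int c * g = (-1) * g" by (simp add: assms(1))
  have "real_of_int b > (-7) \<and> real_of_int b < 4"
    using assms(2) cg g_lo' g_hi' unfolding abs_le_iff by linarith
  then have "(-7) < b \<and> b < 4" by linarith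
  then have "b = (-6) \<or> b = (-5) \<or> b = (-4) \<or> b = (-3) \<or> b = (-2) \<or> b = (-1) \<or> b = 0 \<or> b = 1 \<or> b = 2 \<or> b = 3" by presburger
  then show ?thesis
    apply (elim disjE)
    apply (erule cb_m1_m6[OF assms(1) _ assms(3-5)])
    apply (erule cb_m1_m5[OF assms(1) _ assms(3-5)])
    apply (erule cb_m1_m4[OF assms(1) _ assms(3-5)])
    apply (erule cb_m1_m3[OF assms(1) _ assms(3-5)])
    apply (erule cb_m1_m2[OF assms(1) _ assms(3-5)])
    apply (erule cb_m1_m1[OF assms(1) _ assms(3-5)])
    apply (erule cb_m1_0[OF assms(1) _ assms(3-5)])
    apply (erule cb_m1_1[OF assms(1) _ assms(3-5)])
    apply (erule cb_m1_2[OF assms(1) _ assms(3-5)])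
    apply (erule cb_m1_3[OF assms(1) _ assms(3-5)])
    done
qed

lemma c_0: assumes "c = 0" "\<bar>real_of_int b - real_of_int c * g\<bar> \<le> 4706/1000" "1 \<le> real_of_int a + real_of_int b * g + real_of_int c * g^2"
    "real_of_int a + real_of_int b * g + real_of_int c * g^2 < g" "nrm (ZG a b c) \<in> {1,5,7}"
  shows "(a,b,c) \<in> {(1,0,0),(-1,-1,2),(-2,1,1)}"
proof -
  have cg: "real_of_int c * g = 0 * g" by (simp add: assms(1))
  have "real_of_int b > (-5) \<and> real_of_int b < 5"
    using assms(2) cg g_lo' g_hi' unfolding abs_le_iff by linarith
  then have "(-5) < b \<and> b < 5" by linarith
  then have "b = (-4) \<or> b = (-3) \<or> b = (-2) \<or> b = (-1) \<or> b = 0 \<or> b = 1 \<or> b = 2 \<or> b = 3 \<or> b = 4" by presburger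
  then show ?thesis
    apply (elim disjE)
    apply (erule cb_0_m4[OF assms(1) _ assms(3-5)])
    apply (erule cb_0_m3[OF assms(1) _ assms(3-5)])
    apply (erule cb_0_m2[OF assms(1) _ assms(3-5)])
    apply (erule cb_0_m1[OF assms(1) _ assms(3-5)])
    apply (erule cb_0_0[OF assms(1) _ assms(3-5)])
    apply (erule cb_0_1[OF assms(1) _ assms(3-5)])
    apply (erule cb_0_2[OF assms(1) _ assms(3-5)])
    apply (erule cb_0_3[OF assms(1) _ assms(3-5)])
    apply (erule cb_0_4[OF assms(1) _ assms(3-5)])
    done
qed

lemma c_1: assumes "c = 1" "\<bar>real_of_int b - real_of_int c * g\<bar> \<le> 4706/1000" "1 \<le> real_of_int a + real_of_int b * g + real_of_int c * g^2"
    "real_of_int a + real_of_int b * g + real_of_int c * g^2 < g" "nrm (ZG a b c) \<in> {1,5,7}"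
  shows "(a,b,c) \<in> {(1,0,0),(-1,-1,2),(-2,1,1)}"
proof -
  have cg: "real_of_int c * g = 1 * g" by (simp add: assms(1))
  have "real_of_int b > (-4) \<and> real_of_int b < 7"
    using assms(2) cg g_lo' g_hi' unfolding abs_le_iff by linarith
  then have "(-4) < b \<and> b < 7" by linarith
  then have "b = (-3) \<or> b = (-2) \<or> b = (-1) \<or> b = 0 \<or> b = 1 \<or> b = 2 \<or> b = 3 \<or> b = 4 \<or> b = 5 \<or> b = 6" by presburger
  then show ?thesis
    apply (elim disjE)
    apply (erule cb_1_m3[OF assms(1) _ assms(3-5)])
    apply (erule cb_1_m2[OF assms(1) _ assms(3-5)])
    apply (erule cb_1_m1[OF assms(1) _ assms(3-5)])
    apply (erule cb_1_0[OF assms(1) _ assms(3-5)])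
    apply (erule cb_1_1[OF assms(1) _ assms(3-5)])
    apply (erule cb_1_2[OF assms(1) _ assms(3-5)])
    apply (erule cb_1_3[OF assms(1) _ assms(3-5)])
    apply (erule cb_1_4[OF assms(1) _ assms(3-5)])
    apply (erule cb_1_5[OF assms(1) _ assms(3-5)])
    apply (erule cb_1_6[OF assms(1) _ assms(3-5)])
    done
qed

lemma c_2: assumes "c = 2" "\<bar>real_of_int b - real_of_int c * g\<bar> \<le> 4706/1000" "1 \<le> real_of_int a + real_of_int b * g + real_of_int c * g^2"
    "real_of_int a + real_of_int b * g + real_of_int c * g^2 < g" "nrm (ZG a b c) \<in> {1,5,7}"
  shows "(a,b,c) \<in> {(1,0,0),(-1,-1,2),(-2,1,1)}"
proof -
  have cg: "real_of_int c * g = 2 * g" by (simp add: assms(1))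
  have "real_of_int b > (-3) \<and> real_of_int b < 8"
    using assms(2) cg g_lo' g_hi' unfolding abs_le_iff by linarith
  then have "(-3) < b \<and> b < 8" by linarith
  then have "b = (-2) \<or> b = (-1) \<or> b = 0 \<or> b = 1 \<or> b = 2 \<or> b = 3 \<or> b = 4 \<or> b = 5 \<or> b = 6 \<or> b = 7" by presburger
  then show ?thesis
    apply (elim disjE)
    apply (erule cb_2_m2[OF assms(1) _ assms(3-5)])
    apply (erule cb_2_m1[OF assms(1) _ assms(3-5)])
    apply (erule cb_2_0[OF assms(1) _ assms(3-5)])
    apply (erule cb_2_1[OF assms(1) _ assms(3-5)])
    apply (erule cb_2_2[OF assms(1) _ assms(3-5)])
    apply (erule cb_2_3[OF assms(1) _ assms(3-5)])
    apply (erule cb_2_4[OF assms(1) _ assms(3-5)])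
    apply (erule cb_2_5[OF assms(1) _ assms(3-5)])
    apply (erule cb_2_6[OF assms(1) _ assms(3-5)])
    apply (erule cb_2_7[OF assms(1) _ assms(3-5)])
    done
qed

lemma c_3: assumes "c = 3" "\<bar>real_of_int b - real_of_int c * g\<bar> \<le> 4706/1000" "1 \<le> real_of_int a + real_of_int b * g + real_of_int c * g^2"
    "real_of_int a + real_of_int b * g + real_of_int c * g^2 < g" "nrm (ZG a b c) \<in> {1,5,7}"
  shows "(a,b,c) \<in> {(1,0,0),(-1,-1,2),(-2,1,1)}"
proof -
  have cg: "real_of_int c * g = 3 * g" by (simp add: assms(1))
  have "real_of_int b > (-1) \<and> real_of_int b < 9"
    using assms(2) cg g_lo' g_hi' unfolding abs_le_iff by linarith
  then have "(-1) < b \<and> b < 9" by linarith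
  then have "b = 0 \<or> b = 1 \<or> b = 2 \<or> b = 3 \<or> b = 4 \<or> b = 5 \<or> b = 6 \<or> b = 7 \<or> b = 8" by presburger
  then show ?thesis
    apply (elim disjE)
    apply (erule cb_3_0[OF assms(1) _ assms(3-5)])
    apply (erule cb_3_1[OF assms(1) _ assms(3-5)])
    apply (erule cb_3_2[OF assms(1) _ assms(3-5)])
    apply (erule cb_3_3[OF assms(1) _ assms(3-5)])
    apply (erule cb_3_4[OF assms(1) _ assms(3-5)])
    apply (erule cb_3_5[OF assms(1) _ assms(3-5)])
    apply (erule cb_3_6[OF assms(1) _ assms(3-5)])
    apply (erule cb_3_7[OF assms(1) _ assms(3-5)])
    apply (erule cb_3_8[OF assms(1) _ assms(3-5)])
    done
qed


lemma sq_bound: fixes x B :: real assumes "x^2 \<le> B^2" "0 \<le> B" shows "\<bar>x\<bar> \<le> B"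
  using assms by (metis abs_le_square_iff abs_of_nonneg)

lemma box_main:
  fixes a b c :: int
  assumes E1: "1 \<le> e (ZG a b c)" and E2: "e (ZG a b c) < g" and Nv: "nrm (ZG a b c) \<in> {1,5,7}"
  shows "(a,b,c) \<in> {(1,0,0),(-1,-1,2),(-2,1,1)}"
proof -
  define A B C where "A = real_of_int a" and "B = real_of_int b" and "C = real_of_int c"
  define E where "E = A + B*g + C*g^2"
  define P where "P = 2*A*g - B*g^2 + C*g - C"
  define S where "S = B - C*g"
  define Nr where "Nr = real_of_int (nrm (ZG a b c))"
  have EE: "e (ZG a b c) = E" by (simp add: e_ZG E_def A_def B_def C_def)
  have "E * (P^2 + g*(3-g)*S^2) - 4*g^2 * Nr =
     (3*C^3*g^2 - C^3*g^3 - B*C^2*g - B*C^2*g^2 + B^2*C*g^3 + B^3*g^2 - A*C^2 + 3*A*C^2*g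
      - 4*A*B*C*g^2 - 3*A*B^2*g + 4*A^2*C*g) * (g^3 - g - 1)"
    unfolding E_def P_def S_def Nr_def A_def B_def C_def
    by (simp add: nrm_ZG power2_eq_square power3_eq_cube algebra_simps)
  then have iden: "E * (P^2 + g*(3-g)*S^2) = 4*g^2 * Nr" using g3 by simp
  have Nle: "Nr \<le> 7" using Nv by (auto simp: Nr_def)
  have gpos: "g > 0" and g3pos: "3 - g > 0" using g_lo' g_hi' by auto
  have Q0: "0 \<le> g*(3-g)*S^2" using gpos g3pos by simp
  have P0: "0 \<le> P^2" by simp
  have E1': "1 \<le> E" and E2': "E < g" using E1 E2 EE by auto
  have "P^2 + g*(3-g)*S^2 \<le> E * (P^2 + g*(3-g)*S^2)"
    using E1' Q0 P0 by (metis add_nonneg_nonneg mult_1 mult_right_mono)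
  also have "\<dots> = 4*g^2 * Nr" using iden by simp
  also have "\<dots> \<le> 4*g^2 * 7" using Nle by (intro mult_left_mono) auto
  finally have Qle: "P^2 + g*(3-g)*S^2 \<le> 28*g^2" by simp
  have "P^2 \<le> (7011/1000)^2" using Qle Q0 g2_hi by (simp add: power2_eq_square[of "7011/1000"]; linarith)
  then have Pb: "\<bar>P\<bar> \<le> 7011/1000" by (rule sq_bound) simp
  have "g * ((3-g)*S^2) = g*(3-g)*S^2" by simp
  also have "\<dots> \<le> 28*g^2" using Qle P0 by linarith
  also have "\<dots> = g * (28*g)" by (simp add: power2_eq_square)
  finally have "g * ((3-g)*S^2) \<le> g * (28*g)" .
  then have "(3-g)*S^2 \<le> 28*g" using gpos by simp
  moreover have "(16752/10000) * S^2 \<le> (3-g)*S^2" using g_hi' by (intro mult_right_mono) auto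
  moreover have "(4706/1000::real)^2 = 22146436/1000000" by (simp add: power2_eq_square)
  ultimately have "S^2 \<le> (4706/1000)^2" using g_hi' by linarith
  then have Sb: "\<bar>S\<bar> \<le> 4706/1000" by (rule sq_bound) simp
  have "2*g*E - P - 3*g^2*S - C*(4*g+6) = 5*C*(g^3-g-1)"
    unfolding E_def P_def S_def by (simp add: power2_eq_square power3_eq_cube algebra_simps)
  then have Ceq: "C*(4*g+6) = 2*g*E - P - 3*g^2*S" using g3 by simp
  have gE1: "g \<le> g*E" using E1' gpos by simp
  have gE2: "g*E \<le> g^2" using E2' gpos by (simp add: power2_eq_square)
  have "\<bar>g^2*S\<bar> \<le> 17551/10000 * (4706/1000)"
    unfolding abs_mult using Sb g2_hi by (intro mult_mono) auto
  then have gS: "- (17551/10000 * (4706/1000)) \<le> g^2*S \<and> g^2*S \<le> 17551/10000 * (4706/1000)" by linarith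
  have Ceq': "C*(4*g+6) = 2*(g*E) - P - 3*(g^2*S)" using Ceq by (simp add: mult.assoc)
  have Clo: "C*(4*g+6) > -2915/100" using Ceq' gE1 gS Pb g_lo' unfolding abs_le_iff by linarith
  have Chi: "C*(4*g+6) < 3530/100" using Ceq' gE2 gS Pb g2_hi unfolding abs_le_iff by linarith
  have c_hi: "c \<le> 3"
  proof (rule ccontr)
    assume "\<not> c \<le> 3"
    then have "4 \<le> C" by (simp add: C_def)
    then have "4 * (4*g+6) \<le> C*(4*g+6)" using gpos by (intro mult_right_mono) auto
    then have "4 * (4*g+6) < 3530/100" using Chi by (rule le_less_trans)
    then show False using g_lo' by (simp add: algebra_simps)
  qed
  have c_lo: "-2 \<le> c"
  proof (rule ccontr)
    assume "\<not> -2 \<le> c"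
    then have "C \<le> -3" by (simp add: C_def)
    then have "C*(4*g+6) \<le> (-3) * (4*g+6)" using gpos by (intro mult_right_mono) auto
    then have "-2915/100 < (-3) * (4*g+6)" by (rule less_le_trans[OF Clo])
    then show False using g_lo' by (simp add: algebra_simps)
  qed
  have Sb': "\<bar>real_of_int b - real_of_int c * g\<bar> \<le> 4706/1000" using Sb by (simp add: S_def B_def C_def)
  have E1'': "1 \<le> real_of_int a + real_of_int b * g + real_of_int c * g^2"
   and E2'': "real_of_int a + real_of_int b * g + real_of_int c * g^2 < g" using E1 E2 by (simp_all add: e_ZG)
  have "c = -2 \<or> c = -1 \<or> c = 0 \<or> c = 1 \<or> c = 2 \<or> c = 3" using c_lo c_hi by presburger
  then show ?thesis
    apply (elim disjE)
    apply (erule c_m2[OF _ Sb' E1'' E2'' Nv])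
    apply (erule c_m1[OF _ Sb' E1'' E2'' Nv])
    apply (erule c_0[OF _ Sb' E1'' E2'' Nv])
    apply (erule c_1[OF _ Sb' E1'' E2'' Nv])
    apply (erule c_2[OF _ Sb' E1'' E2'' Nv])
    apply (erule c_3[OF _ Sb' E1'' E2'' Nv])
    done
qed


lemma c1_add: "c1 (x + y) = c1 x + c1 y" by (cases x; cases y) simp
lemma of_nat_zg: "(of_nat k :: zg) = ZG (int k) 0 0"
  by (induct k) (simp_all add: zg_01)
lemma c1_of_nat_mult: "c1 (of_nat k * x) = int k * c1 x"
  by (cases x) (simp add: of_nat_zg)
lemma c1_one: "c1 1 = 0" by (simp add: zg_01)

lemma of_nat_dvd_zg: "(a::nat) dvd b \<Longrightarrow> (of_nat a :: zg) dvd of_nat b"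
  by (metis dvd_def of_nat_mult)

lemma pow_p:
  assumes pr: "prime p" and p3: "p \<ge> 3" and r: "r \<ge> 1"
  shows "\<exists>W. (1 + of_nat (p^r) * Y)^p = 1 + of_nat (p^(r+1)) * Y + of_nat (p^(r+2)) * (W::zg)"
proof -
  define X where "X = of_nat (p^r) * Y"
  define D :: zg where "D = of_nat (p^(r+2))"
  have Xk: "X^k = of_nat (p^(r*k)) * Y^k" for k
    by (simp add: X_def power_mult_distrib power_mult of_nat_power)
  have bin: "(X + 1)^p = (\<Sum>k\<le>p. of_nat (p choose k) * X^k)"
    by (simp add: binomial_ring)
  have split: "{..p} = insert 0 (insert 1 {2..p})" using p3 by auto
  have "(\<Sum>k\<le>p. of_nat (p choose k) * X^k) = 1 + of_nat p * X + (\<Sum>k\<in>{2..p}. of_nat (p choose k) * X^k)"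
    unfolding split by (simp add: add.assoc)
  moreover have "D dvd (\<Sum>k\<in>{2..p}. of_nat (p choose k) * X^k)"
  proof (rule dvd_sum)
    fix k assume k: "k \<in> {2..p}"
    show "D dvd of_nat (p choose k) * X^k"
    proof (cases "k < p")
      case True
      have "p dvd (p choose k)" using True k pr by (intro dvd_choose_prime) auto
      then obtain m where m: "p choose k = p * m" by blast
      have "r * 2 \<le> r * k" using k by (intro mult_le_mono2) simp
      then have "r + 2 \<le> r * k + 1" using r by linarith
      then have "p^(r+2) dvd p^(r*k+1)" by (rule le_imp_power_dvd)
      then have "D dvd of_nat (p^(r*k+1))" unfolding D_def by (rule of_nat_dvd_zg)
      moreover have "of_nat (p choose k) * X^k = of_nat (p^(r*k+1)) * (of_nat m * Y^k)"
        by (simp add: m Xk power_add algebra_simps)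
      ultimately show ?thesis by simp
    next
      case False
      then have kp: "k = p" using k by auto
      have "r * 3 \<le> r * p" using p3 by (intro mult_le_mono2) simp
      then have "r + 2 \<le> r * p" using r by linarith
      then have "p^(r+2) dvd p^(r*p)" by (rule le_imp_power_dvd)
      then have "D dvd of_nat (p^(r*p))" unfolding D_def by (rule of_nat_dvd_zg)
      then show ?thesis by (simp add: kp Xk)
    qed
  qed
  then obtain W where W: "(\<Sum>k\<in>{2..p}. of_nat (p choose k) * X^k) = D * W" by blast
  have "of_nat p * X = of_nat (p^(r+1)) * Y" by (simp add: X_def)
  ultimately have "(1 + of_nat (p^r) * Y)^p = 1 + of_nat (p^(r+1)) * Y + D * W"
    using bin W by (simp add: X_def add.commute)
  then show ?thesis unfolding D_def by blast
qed



lemma pow_u_gen: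
  fixes q d m Y :: zg
  assumes qd: "q = d * m"
  shows "\<exists>W. (1 + q * Y)^u = 1 + of_nat u * q * Y + q * d * W"
proof (induct u)
  case 0 show ?case by (rule exI[of _ 0]) simp
next
  case (Suc u)
  then obtain W where W: "(1 + q * Y)^u = 1 + of_nat u * q * Y + q * d * W" by blast
  have "(1 + q * Y)^Suc u = (1 + of_nat u * q * Y + q * d * W) * (1 + q * Y)"
    by (simp only: power_Suc2 W)
  also have "\<dots> = 1 + of_nat (Suc u) * q * Y + q * d * (W + of_nat u * m * Y^2 + q * W * Y)"
    by (simp add: qd algebra_simps power2_eq_square)
  finally show ?case by blast
qed

lemma pow_ps:
  assumes pr: "prime p" and p3: "p \<ge> 3"
  shows "\<exists>W. (1 + of_nat p * \<beta>)^(p^s) = 1 + of_nat (p^(s+1)) * (\<beta> + of_nat p * (W::zg))"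
proof (induct s)
  case 0 show ?case by (rule exI[of _ 0]) simp
next
  case (Suc s)
  then obtain W where W: "(1 + of_nat p * \<beta>)^(p^s) = 1 + of_nat (p^(s+1)) * (\<beta> + of_nat p * (W::zg))" by blast
  obtain W2 where W2: "(1 + of_nat (p^(s+1)) * (\<beta> + of_nat p * W))^p
     = 1 + of_nat (p^(s+1+1)) * (\<beta> + of_nat p * W) + of_nat (p^(s+1+2)) * (W2::zg)"
    using pow_p[OF pr p3, of "s+1"] by auto
  have e1: "(of_nat (p^(s+1+2)) :: zg) = of_nat (p^(Suc s+1)) * of_nat p"
    by (simp only: of_nat_mult[symmetric]) (simp add: power_add)
  have e2: "(of_nat (p^(s+1+1)) :: zg) = of_nat (p^(Suc s+1))" by simp
  have "(1 + of_nat p * \<beta>)^(p^Suc s) = ((1 + of_nat p * \<beta>)^(p^s))^p"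
    by (simp add: power_mult[symmetric] mult.commute)
  also have "\<dots> = 1 + of_nat (p^(Suc s+1)) * (\<beta> + of_nat p * W) + of_nat (p^(Suc s+1)) * of_nat p * W2"
    by (simp only: W W2 e1 e2)
  also have "\<dots> = 1 + of_nat (p^(Suc s+1)) * (\<beta> + of_nat p * (W + W2))"
    by (simp only: distrib_left mult.assoc add.assoc)
  finally show ?case by blast
qed

lemma decomp:
  assumes "(p::nat) \<ge> 2" shows "n > 0 \<Longrightarrow> \<exists>s u. n = p^s * u \<and> \<not> p dvd u"
proof (induct n rule: less_induct)
  case (less n)
  show ?case
  proof (cases "p dvd n")
    case True
    then obtain m where m: "n = p * m" by blast
    then have "m < n" "m > 0" using less.prems assms by auto
    then obtain s u where "m = p^s * u" "\<not> p dvd u" using less.hyps by blast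
    then have "n = p^Suc s * u" using m by simp
    then show ?thesis using \<open>\<not> p dvd u\<close> by blast
  next
    case False
    then show ?thesis by (intro exI[of _ 0] exI[of _ n]) simp
  qed
qed


lemma skolem:
  assumes pr: "prime p" and p3: "p \<ge> 3" and w0: "c1 w = 0" and nd: "\<not> int p dvd c1 (w * \<beta>)" and n: "n > 0"
  shows "c1 (w * (1 + of_nat p * \<beta>)^n) \<noteq> 0"
proof
  assume H: "c1 (w * (1 + of_nat p * \<beta>)^n) = 0"
  obtain s u where su: "n = p^s * u" "\<not> p dvd u" using decomp[of p n] n p3 by auto
  obtain W where W: "(1 + of_nat p * \<beta>)^(p^s) = 1 + of_nat (p^(s+1)) * (\<beta> + of_nat p * (W::zg))"
    using pow_ps[OF pr p3] by blast
  define q :: zg where "q = of_nat (p^(s+1))"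
  have qd: "q = of_nat p * of_nat (p^s)" by (simp add: q_def)
  obtain W2 where W2: "(1 + q * (\<beta> + of_nat p * W))^u = 1 + of_nat u * q * (\<beta> + of_nat p * W) + q * of_nat p * (W2::zg)"
    using pow_u_gen[OF qd] by blast
  have "(1 + of_nat p * \<beta>)^n = 1 + q * (of_nat u * \<beta>) + q * of_nat p * (of_nat u * W + W2)"
    unfolding su(1) power_mult W q_def[symmetric] W2 by (simp add: algebra_simps)
  then have "w * (1 + of_nat p * \<beta>)^n = w + of_nat (p^(s+1) * u) * (w * \<beta>) + of_nat (p^(s+1) * p) * (w * (of_nat u * W + W2))"
    by (simp add: q_def algebra_simps)
  then have "c1 (w * (1 + of_nat p * \<beta>)^n) = int (p^(s+1) * u) * c1 (w * \<beta>) + int (p^(s+1) * p) * c1 (w * (of_nat u * W + W2))"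
    by (simp only: c1_add c1_of_nat_mult w0)
  with H have "int (p^(s+1)) * (int u * c1 (w * \<beta>) + int p * c1 (w * (of_nat u * W + W2))) = 0"
    by (simp add: algebra_simps)
  then have "int u * c1 (w * \<beta>) = - (int p * c1 (w * (of_nat u * W + W2)))"
    using pr by (simp add: prime_gt_0_nat add_eq_0_iff)
  then have "int p dvd int u * c1 (w * \<beta>)" by (metis dvd_minus_iff dvd_triv_left)
  moreover have "prime (int p)" using pr by (simp add: prime_int_nat_transfer)
  ultimately have "int p dvd int u \<or> int p dvd c1 (w * \<beta>)" by (simp add: prime_dvd_mult_iff)
  then show False using su(2) nd by simp
qed


definition bA :: zg where "bA = ZG 36333 63760 48131"
definition bB :: zg where "bB = ZG (-48) 19 13"

lemma gm58': "gm^58 = ZG 2143648 3761840 2839729" by code_simp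
lemma gi58': "gi^58 = ZG (-2831) 1121 767" by code_simp
lemma gm58: "gm^58 = 1 + of_nat 59 * bA" by (simp add: gm58' of_nat_zg zg_01 bA_def)
lemma gi58: "gi^58 = 1 + of_nat 59 * bB" by (simp add: gi58' of_nat_zg zg_01 bB_def)

lemma prime59: "prime (59::nat)" by code_simp

lemma pow_cong: "\<exists>W. (1 + of_nat p * \<beta>)^n = 1 + of_nat p * (W::zg)"
proof (induct n)
  case 0 show ?case by (rule exI[of _ 0]) simp
next
  case (Suc n)
  then obtain W where W: "(1 + of_nat p * \<beta>)^n = 1 + of_nat p * (W::zg)" by blast
  have "(1 + of_nat p * \<beta>)^Suc n = (1 + of_nat p * W) * (1 + of_nat p * \<beta>)" by (simp only: power_Suc2 W)
  also have "\<dots> = 1 + of_nat p * (W + \<beta> + of_nat p * W * \<beta>)" by (simp add: algebra_simps)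
  finally show ?case by blast
qed

lemma gp58: "gp (58 * t) = (gm^58)^nat t * (gi^58)^nat (-t)"
proof -
  have "nat (- (58 * t)) = 58 * nat (- t)" "nat (58 * t) = 58 * nat t" by (cases "t \<ge> 0"; simp)+
  then show ?thesis unfolding gp_def power_mult[symmetric] by simp
qed

lemma c1_numeral_mult: "c1 (numeral n * x) = numeral n * c1 x"
  using c1_of_nat_mult[of "numeral n" x] by simp

lemma gp58_cong: "\<exists>W. gp (58 * t) = 1 + of_nat 59 * W"
proof -
  obtain W1 where W1: "(gm^58)^nat t = 1 + of_nat 59 * W1" using pow_cong[of 59 bA "nat t"] gm58 by auto
  obtain W2 where W2: "(gi^58)^nat (-t) = 1 + of_nat 59 * W2" using pow_cong[of 59 bB "nat (-t)"] gi58 by auto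
  have "gp (58 * t) = 1 + of_nat 59 * (W1 + W2 + of_nat 59 * W1 * W2)"
    unfolding gp58 W1 W2 by (simp add: algebra_simps)
  then show ?thesis by blast
qed

lemma modcls:
  assumes "c1 (gp k * \<rho>) = 0"
  shows "(59::int) dvd c1 (gm ^ nat (k mod 58) * \<rho>)"
proof -
  have k: "k = k mod 58 + 58 * (k div 58)" by simp
  have "gp k = gp (k mod 58) * gp (58 * (k div 58))" by (subst k, rule gp_add)
  moreover have "gp (k mod 58) = gm ^ nat (k mod 58)" using gp_nat[of "nat (k mod 58)"] by simp
  moreover obtain W where "gp (58 * (k div 58)) = 1 + of_nat 59 * W" using gp58_cong by blast
  ultimately have "gp k * \<rho> = gm ^ nat (k mod 58) * \<rho> + of_nat 59 * (gm ^ nat (k mod 58) * \<rho> * W)"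
    by (simp add: algebra_simps)
  then have "c1 (gp k * \<rho>) = c1 (gm ^ nat (k mod 58) * \<rho>) + 59 * c1 (gm ^ nat (k mod 58) * \<rho> * W)"
    by (simp add: c1_add c1_of_nat_mult c1_numeral_mult)
  with assms show ?thesis by (metis add_eq_0_iff dvd_minus_iff dvd_triv_left)
qed

lemma zero_class:
  assumes wz: "gp z * \<rho> = w" and w0: "c1 w = 0" and nA: "\<not> (59::int) dvd c1 (w * bA)" and nB: "\<not> (59::int) dvd c1 (w * bB)"
    and km: "(k - z) mod 58 = 0" and H: "c1 (gp k * \<rho>) = 0"
  shows "k = z"
proof -
  define t where "t = (k - z) div 58"
  have k: "k = z + 58 * t" using km unfolding t_def by (metis add.commute diff_add_cancel div_mult_mod_eq add_0 mult.commute)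
  have "gp k * \<rho> = w * ((gm^58)^nat t * (gi^58)^nat (-t))"
    unfolding k gp_add gp58 wz[symmetric] by (simp add: algebra_simps)
  then have H': "c1 (w * ((gm^58)^nat t * (gi^58)^nat (-t))) = 0" using H by simp
  have p3: "(59::nat) \<ge> 3" by simp
  show ?thesis
  proof (cases "t = 0")
    case True then show ?thesis using k by simp
  next
    case False
    show ?thesis
    proof (cases "t > 0")
      case True
      then have "c1 (w * (1 + of_nat 59 * bA)^nat t) \<noteq> 0"
        using nA by (intro skolem[OF prime59 p3 w0]) auto
      then show ?thesis using H' True by (simp add: gm58)
    next
      case False
      then have "t < 0" using \<open>t \<noteq> 0\<close> by simp
      then have "c1 (w * (1 + of_nat 59 * bB)^nat (-t)) \<noteq> 0"
        using nB by (intro skolem[OF prime59 p3 w0]) auto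
      then show ?thesis using H' \<open>t < 0\<close> by (simp add: gi58)
    qed
  qed
qed

lemma res1: "\<forall>r\<in>{..<58::nat}. (59::int) dvd c1 (gm^r * ZG 1 0 0) \<longrightarrow> r \<in> {0,2,44,53,57}" by code_simp
lemma res5: "\<forall>r\<in>{..<58::nat}. (59::int) dvd c1 (gm^r * ZG (-1) (-1) 2) \<longrightarrow> r \<in> {3,55}" by code_simp
lemma res7: "\<forall>r\<in>{..<58::nat}. (59::int) dvd c1 (gm^r * ZG (-2) 1 1) \<longrightarrow> r \<in> {3,53}" by code_simp


lemma z1_0: assumes a: "k mod 58 = 0" and b: "c1 (gp k * (ZG 1 0 0)) = 0" shows "k = 0"
proof -
  have f1: "gp (0) * (ZG 1 0 0) = ZG 1 0 0" by code_simp
  have f2: "c1 (ZG 1 0 0) = 0" by simp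
  have f3: "\<not> (59::int) dvd c1 (ZG 1 0 0 * bA)" by code_simp
  have f4: "\<not> (59::int) dvd c1 (ZG 1 0 0 * bB)" by code_simp
  have f5: "(k - (0)) mod 58 = 0" using a by presburger
  show ?thesis by (rule zero_class[OF f1 f2 f3 f4 f5 b])
qed

lemma z1_2: assumes a: "k mod 58 = 2" and b: "c1 (gp k * (ZG 1 0 0)) = 0" shows "k = 2"
proof -
  have f1: "gp (2) * (ZG 1 0 0) = ZG 0 0 1" by code_simp
  have f2: "c1 (ZG 0 0 1) = 0" by simp
  have f3: "\<not> (59::int) dvd c1 (ZG 0 0 1 * bA)" by code_simp
  have f4: "\<not> (59::int) dvd c1 (ZG 0 0 1 * bB)" by code_simp
  have f5: "(k - (2)) mod 58 = 0" using a by presburger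
  show ?thesis by (rule zero_class[OF f1 f2 f3 f4 f5 b])
qed

lemma z1_m1: assumes a: "k mod 58 = 57" and b: "c1 (gp k * (ZG 1 0 0)) = 0" shows "k = (-1)"
proof -
  have f1: "gp ((-1)) * (ZG 1 0 0) = ZG (-1) 0 1" by code_simp
  have f2: "c1 (ZG (-1) 0 1) = 0" by simp
  have f3: "\<not> (59::int) dvd c1 (ZG (-1) 0 1 * bA)" by code_simp
  have f4: "\<not> (59::int) dvd c1 (ZG (-1) 0 1 * bB)" by code_simp
  have f5: "(k - ((-1))) mod 58 = 0" using a by presburger
  show ?thesis by (rule zero_class[OF f1 f2 f3 f4 f5 b])
qed

lemma z1_m5: assumes a: "k mod 58 = 53" and b: "c1 (gp k * (ZG 1 0 0)) = 0" shows "k = (-5)"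
proof -
  have f1: "gp ((-5)) * (ZG 1 0 0) = ZG 2 0 (-1)" by code_simp
  have f2: "c1 (ZG 2 0 (-1)) = 0" by simp
  have f3: "\<not> (59::int) dvd c1 (ZG 2 0 (-1) * bA)" by code_simp
  have f4: "\<not> (59::int) dvd c1 (ZG 2 0 (-1) * bB)" by code_simp
  have f5: "(k - ((-5))) mod 58 = 0" using a by presburger
  show ?thesis by (rule zero_class[OF f1 f2 f3 f4 f5 b])
qed

lemma z1_m14: assumes a: "k mod 58 = 44" and b: "c1 (gp k * (ZG 1 0 0)) = 0" shows "k = (-14)"
proof -
  have f1: "gp ((-14)) * (ZG 1 0 0) = ZG (-7) 0 4" by code_simp
  have f2: "c1 (ZG (-7) 0 4) = 0" by simp
  have f3: "\<not> (59::int) dvd c1 (ZG (-7) 0 4 * bA)" by code_simp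
  have f4: "\<not> (59::int) dvd c1 (ZG (-7) 0 4 * bB)" by code_simp
  have f5: "(k - ((-14))) mod 58 = 0" using a by presburger
  show ?thesis by (rule zero_class[OF f1 f2 f3 f4 f5 b])
qed

lemma zeros1: assumes "c1 (gp k * (ZG 1 0 0)) = 0" shows "k \<in> {0,2,(-1),(-5),(-14)}"
proof -
  have r: "nat (k mod 58) \<in> {..<58}" by (simp add: nat_less_iff)
  have nn: "k mod 58 = int (nat (k mod 58))" by simp
  have "nat (k mod 58) \<in> {0,2,44,53,57}" using mp[OF bspec[OF res1 r] modcls[OF assms]] .
  then have "k mod 58 = 0 \<or> k mod 58 = 2 \<or> k mod 58 = 44 \<or> k mod 58 = 53 \<or> k mod 58 = 57" using nn by auto
  then show ?thesis using z1_0[OF _ assms] z1_2[OF _ assms] z1_m1[OF _ assms] z1_m5[OF _ assms] z1_m14[OF _ assms] by auto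
qed

lemma z5_3: assumes a: "k mod 58 = 3" and b: "c1 (gp k * (ZG (-1) (-1) 2)) = 0" shows "k = 3"
proof -
  have f1: "gp (3) * (ZG (-1) (-1) 2) = ZG 1 0 1" by code_simp
  have f2: "c1 (ZG 1 0 1) = 0" by simp
  have f3: "\<not> (59::int) dvd c1 (ZG 1 0 1 * bA)" by code_simp
  have f4: "\<not> (59::int) dvd c1 (ZG 1 0 1 * bB)" by code_simp
  have f5: "(k - (3)) mod 58 = 0" using a by presburger
  show ?thesis by (rule zero_class[OF f1 f2 f3 f4 f5 b])
qed

lemma z5_m3: assumes a: "k mod 58 = 55" and b: "c1 (gp k * (ZG (-1) (-1) 2)) = 0" shows "k = (-3)"
proof -
  have f1: "gp ((-3)) * (ZG (-1) (-1) 2) = ZG (-3) 0 2" by code_simp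
  have f2: "c1 (ZG (-3) 0 2) = 0" by simp
  have f3: "\<not> (59::int) dvd c1 (ZG (-3) 0 2 * bA)" by code_simp
  have f4: "\<not> (59::int) dvd c1 (ZG (-3) 0 2 * bB)" by code_simp
  have f5: "(k - ((-3))) mod 58 = 0" using a by presburger
  show ?thesis by (rule zero_class[OF f1 f2 f3 f4 f5 b])
qed

lemma zeros5: assumes "c1 (gp k * (ZG (-1) (-1) 2)) = 0" shows "k \<in> {3,(-3)}"
proof -
  have r: "nat (k mod 58) \<in> {..<58}" by (simp add: nat_less_iff)
  have nn: "k mod 58 = int (nat (k mod 58))" by simp
  have "nat (k mod 58) \<in> {3,55}" using mp[OF bspec[OF res5 r] modcls[OF assms]] .
  then have "k mod 58 = 3 \<or> k mod 58 = 55" using nn by auto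
  then show ?thesis using z5_3[OF _ assms] z5_m3[OF _ assms] by auto
qed

lemma z7_3: assumes a: "k mod 58 = 3" and b: "c1 (gp k * (ZG (-2) 1 1)) = 0" shows "k = 3"
proof -
  have f1: "gp (3) * (ZG (-2) 1 1) = ZG (-1) 0 2" by code_simp
  have f2: "c1 (ZG (-1) 0 2) = 0" by simp
  have f3: "\<not> (59::int) dvd c1 (ZG (-1) 0 2 * bA)" by code_simp
  have f4: "\<not> (59::int) dvd c1 (ZG (-1) 0 2 * bB)" by code_simp
  have f5: "(k - (3)) mod 58 = 0" using a by presburger
  show ?thesis by (rule zero_class[OF f1 f2 f3 f4 f5 b])
qed

lemma z7_m5: assumes a: "k mod 58 = 53" and b: "c1 (gp k * (ZG (-2) 1 1)) = 0" shows "k = (-5)"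
proof -
  have f1: "gp ((-5)) * (ZG (-2) 1 1) = ZG (-5) 0 3" by code_simp
  have f2: "c1 (ZG (-5) 0 3) = 0" by simp
  have f3: "\<not> (59::int) dvd c1 (ZG (-5) 0 3 * bA)" by code_simp
  have f4: "\<not> (59::int) dvd c1 (ZG (-5) 0 3 * bB)" by code_simp
  have f5: "(k - ((-5))) mod 58 = 0" using a by presburger
  show ?thesis by (rule zero_class[OF f1 f2 f3 f4 f5 b])
qed

lemma zeros7: assumes "c1 (gp k * (ZG (-2) 1 1)) = 0" shows "k \<in> {3,(-5)}"
proof -
  have r: "nat (k mod 58) \<in> {..<58}" by (simp add: nat_less_iff)
  have nn: "k mod 58 = int (nat (k mod 58))" by simp
  have "nat (k mod 58) \<in> {3,53}" using mp[OF bspec[OF res7 r] modcls[OF assms]] .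
  then have "k mod 58 = 3 \<or> k mod 58 = 53" using nn by auto
  then show ?thesis using z7_3[OF _ assms] z7_m5[OF _ assms] by auto
qed


lemma nrm_iden: "e x * ((2*c0 x*g - c1 x*g^2 + c2 x*g - c2 x)^2 + g*(3-g)*(c1 x - c2 x*g)^2) = 4*g^2 * real_of_int (nrm x)"
proof -
  obtain a b c where x: "x = ZG a b c" by (cases x)
  define A B C where "A = real_of_int a" and "B = real_of_int b" and "C = real_of_int c"
  have "e x * ((2*c0 x*g - c1 x*g^2 + c2 x*g - c2 x)^2 + g*(3-g)*(c1 x - c2 x*g)^2) - 4*g^2 * real_of_int (nrm x) =
     (3*C^3*g^2 - C^3*g^3 - B*C^2*g - B*C^2*g^2 + B^2*C*g^3 + B^3*g^2 - A*C^2 + 3*A*C^2*g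
      - 4*A*B*C*g^2 - 3*A*B^2*g + 4*A^2*C*g) * (g^3 - g - 1)"
    unfolding x A_def B_def C_def
    by (simp add: e_ZG nrm_ZG power2_eq_square power3_eq_cube algebra_simps)
  then show ?thesis using g3 by simp
qed

lemma nrm_sign:
  assumes "e x > 0" shows "nrm x \<ge> 0"
proof -
  have gpos: "g > 0" and g3pos: "3 - g > 0" using g_lo' g_hi' by auto
  have "0 \<le> (2*c0 x*g - c1 x*g^2 + c2 x*g - c2 x)^2 + g*(3-g)*(c1 x - c2 x*g)^2"
    using gpos g3pos by (intro add_nonneg_nonneg) auto
  then have "0 \<le> e x * ((2*c0 x*g - c1 x*g^2 + c2 x*g - c2 x)^2 + g*(3-g)*(c1 x - c2 x*g)^2)"
    using assms by simp
  then have "0 \<le> 4*g^2 * real_of_int (nrm x)" unfolding nrm_iden .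
  then show ?thesis using gpos by (simp add: zero_le_mult_iff)
qed

lemma e_nz: assumes "nrm x \<noteq> 0" shows "e x \<noteq> 0"
proof
  assume "e x = 0"
  then have "4*g^2 * real_of_int (nrm x) = 0" using nrm_iden[of x] by simp
  then show False using assms g_lo' by simp
qed

lemma normalize:
  assumes N: "nrm x \<in> {1,-1,5,-5,7,-7}"
  shows "\<exists>k y. y \<in> {ZG 1 0 0, ZG (-1) (-1) 2, ZG (-2) 1 1} \<and> (x = gp k * y \<or> x = - (gp k * y))"
proof -
  have g1: "g > 1" using g_lo' by simp
  have ex0: "e x \<noteq> 0" using N by (intro e_nz) auto
  define x' where "x' = (if e x > 0 then x else - x)"
  have ex': "e x' > 0" using ex0 by (simp add: x'_def e_neg)
  have nx': "nrm x' \<in> {1,-1,5,-5,7,-7}" using N by (auto simp: x'_def nrm_neg)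
  define E0 where "E0 = e x'"
  define fl where "fl = floor (log g E0)"
  have L1: "real_of_int fl \<le> log g E0" and L2: "log g E0 < real_of_int fl + 1" unfolding fl_def by linarith+
  have El: "E0 = g powr (log g E0)" using ex' g1 by (simp add: E0_def)
  have P1: "g powr (real_of_int fl) \<le> E0" using L1 g1 El by (metis less_imp_le powr_mono)
  have P2: "E0 < g powr (real_of_int fl + 1)" using L2 g1 El by (metis powr_less_mono)
  define y where "y = gp (- fl) * x'"
  have ey: "e y = g powr (- real_of_int fl) * E0" by (simp add: y_def e_mult e_gp E0_def)
  have inv: "g powr (- real_of_int fl) * g powr (real_of_int fl) = 1" using g1 by (simp add: powr_add[symmetric])
  have inv2: "g powr (- real_of_int fl) * g powr (real_of_int fl + 1) = g" using g1 by (simp add: powr_add[symmetric])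
  have pos: "g powr (- real_of_int fl) > 0" using g1 by simp
  have ey1: "1 \<le> e y" unfolding ey using mult_left_mono[OF P1, of "g powr (- real_of_int fl)"] pos inv by simp
  have ey2: "e y < g" unfolding ey using mult_strict_left_mono[OF P2 pos] inv2 by simp
  have ny: "nrm y = nrm x'" by (simp add: y_def nrm_gp)
  have "nrm y \<ge> 0" using ey1 by (intro nrm_sign) simp
  then have ny': "nrm (ZG (c0 y) (c1 y) (c2 y)) \<in> {1,5,7}" using nx' ny by auto
  have "(c0 y, c1 y, c2 y) \<in> {(1,0,0),(-1,-1,2),(-2,1,1)}"
    by (rule box_main) (use ey1 ey2 ny' in simp_all)
  then have yy: "y \<in> {ZG 1 0 0, ZG (-1) (-1) 2, ZG (-2) 1 1}" by (cases y) auto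
  have "gp fl * y = x'" unfolding y_def by (simp add: mult.assoc[symmetric] gp_inv)
  then have "x = gp fl * y \<or> x = - (gp fl * y)" by (auto simp: x'_def split: if_splits)
  with yy show ?thesis by blast
qed


lemma c1_neg: "c1 (- z) = - c1 z" by (cases z) simp

lemma gpvals:
  "gp 0 * ZG 1 0 0 = ZG 1 0 0" "gp 2 * ZG 1 0 0 = ZG 0 0 1" "gp (-1) * ZG 1 0 0 = ZG (-1) 0 1"
  "gp (-5) * ZG 1 0 0 = ZG 2 0 (-1)" "gp (-14) * ZG 1 0 0 = ZG (-7) 0 4"
  "gp 3 * ZG (-1) (-1) 2 = ZG 1 0 1" "gp (-3) * ZG (-1) (-1) 2 = ZG (-3) 0 2"
  "gp 3 * ZG (-2) 1 1 = ZG (-1) 0 2" "gp (-5) * ZG (-2) 1 1 = ZG (-5) 0 3"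
  by code_simp+

lemma sols:
  assumes "normK m n \<in> {1,-1,5,-5,7,-7}"
  shows "(m,n) \<in> {(1,0),(-1,0),(0,1),(0,-1),(-1,1),(1,-1),(2,-1),(-2,1),(-7,4),(7,-4),
                   (1,1),(-1,-1),(-3,2),(3,-2),(-1,2),(1,-2),(-5,3),(5,-3)}"
proof -
  have "nrm (ZG m 0 n) \<in> {1,-1,5,-5,7,-7}" using assms by (simp add: nrm_normK)
  then obtain k y where y: "y \<in> {ZG 1 0 0, ZG (-1) (-1) 2, ZG (-2) 1 1}"
    and x: "ZG m 0 n = gp k * y \<or> ZG m 0 n = - (gp k * y)"
    using normalize by blast
  have c: "c1 (gp k * y) = 0" using x
  proof
    assume "ZG m 0 n = gp k * y" then show ?thesis by (metis zg.sel(2))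
  next
    assume "ZG m 0 n = - (gp k * y)"
    then have "c1 (ZG m 0 n) = c1 (- (gp k * y))" by simp
    then show ?thesis by (simp add: c1_neg)
  qed
  from y show ?thesis
  proof (elim insertE)
    assume yy: "y = ZG 1 0 0"
    then have "k \<in> {0,2,-1,-5,-14}" using zeros1 c by simp
    then show ?thesis using x unfolding yy by (elim insertE emptyE) (simp_all add: gpvals, (elim disjE conjE; simp)+)
  next
    assume yy: "y = ZG (-1) (-1) 2"
    then have "k \<in> {3,-3}" using zeros5 c by simp
    then show ?thesis using x unfolding yy by (elim insertE emptyE) (simp_all add: gpvals, (elim disjE conjE; simp)+)
  next
    assume yy: "y = ZG (-2) 1 1"
    then have "k \<in> {3,-5}" using zeros7 c by simp
    then show ?thesis using x unfolding yy by (elim insertE emptyE) (simp_all add: gpvals, (elim disjE conjE; simp)+)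
  qed simp
qed

theorem lemma1:
  shows "({(m::int, n::int). normK m n = 1 \<or> normK m n = -1} =
           {(1, 0), (-1, 0), (0, 1), (0, -1), (-1, 1), (1, -1), (2, -1), (-2, 1), (-7, 4), (7, -4)})
       \<and> ({(m::int, n::int). normK m n = 5 \<or> normK m n = -5} =
           {(1, 1), (-1, -1), (-3, 2), (3, -2)})
       \<and> ({(m::int, n::int). normK m n = 7 \<or> normK m n = -7} =
           {(-1, 2), (1, -2), (-5, 3), (5, -3)})"
proof (intro conjI set_eqI iffI)
  fix p :: "int \<times> int"
  { assume "p \<in> {(m, n). normK m n = 1 \<or> normK m n = -1}"
    then obtain m n where p: "p = (m,n)" and h: "normK m n = 1 \<or> normK m n = -1" by auto
    then have "(m,n) \<in> {(1,0),(-1,0),(0,1),(0,-1),(-1,1),(1,-1),(2,-1),(-2,1),(-7,4),(7,-4),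
                   (1,1),(-1,-1),(-3,2),(3,-2),(-1,2),(1,-2),(-5,3),(5,-3)}" by (intro sols) auto
    then show "p \<in> {(1, 0), (-1, 0), (0, 1), (0, -1), (-1, 1), (1, -1), (2, -1), (-2, 1), (-7, 4), (7, -4)}"
      using h unfolding p by (elim insertE emptyE) (simp_all add: normK_def) }
  { assume "p \<in> {(m, n). normK m n = 5 \<or> normK m n = -5}"
    then obtain m n where p: "p = (m,n)" and h: "normK m n = 5 \<or> normK m n = -5" by auto
    then have "(m,n) \<in> {(1,0),(-1,0),(0,1),(0,-1),(-1,1),(1,-1),(2,-1),(-2,1),(-7,4),(7,-4),
                   (1,1),(-1,-1),(-3,2),(3,-2),(-1,2),(1,-2),(-5,3),(5,-3)}" by (intro sols) auto
    then show "p \<in> {(1, 1), (-1, -1), (-3, 2), (3, -2)}"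
      using h unfolding p by (elim insertE emptyE) (simp_all add: normK_def) }
  { assume "p \<in> {(m, n). normK m n = 7 \<or> normK m n = -7}"
    then obtain m n where p: "p = (m,n)" and h: "normK m n = 7 \<or> normK m n = -7" by auto
    then have "(m,n) \<in> {(1,0),(-1,0),(0,1),(0,-1),(-1,1),(1,-1),(2,-1),(-2,1),(-7,4),(7,-4),
                   (1,1),(-1,-1),(-3,2),(3,-2),(-1,2),(1,-2),(-5,3),(5,-3)}" by (intro sols) auto
    then show "p \<in> {(-1, 2), (1, -2), (-5, 3), (5, -3)}"
      using h unfolding p by (elim insertE emptyE) (simp_all add: normK_def) }
  { assume "p \<in> {(1, 0), (-1, 0), (0, 1), (0, -1), (-1, 1), (1, -1), (2, -1), (-2, 1), (-7, 4), (7, -4)}"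
    then show "p \<in> {(m, n). normK m n = 1 \<or> normK m n = -1}" by (auto simp: normK_def) }
  { assume "p \<in> {(1, 1), (-1, -1), (-3, 2), (3, -2)}"
    then show "p \<in> {(m, n). normK m n = 5 \<or> normK m n = -5}" by (auto simp: normK_def) }
  { assume "p \<in> {(-1, 2), (1, -2), (-5, 3), (5, -3)}"
    then show "p \<in> {(m, n). normK m n = 7 \<or> normK m n = -7}" by (auto simp: normK_def) }
qed


end
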